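(* Fix $0<R<1$, $\varepsilon>0$ with $1-R-\varepsilon>0$, a positive integer $\ell$, and let $q$ be a prime power with $q\ge \max\left(\ell^{\frac{8R}{\varepsilon}+6},\ \ell\cdot 2^{4/\varepsilon}\right)$. Let $\mathcal{C}\subseteq \mathbb{F}_q^n$ be a random linear code of rate $R$. Then with probability at least $1-2q^{-\varepsilon n/8}$, $\mathcal{C}$ is $\left(1-R-\varepsilon,\ \ell,\ L\right)$-list-recoverable with $L\le \left(\frac{2\ell}{\varepsilon}\right)^{2\ell/\varepsilon}$.
   Context: A random linear code (RLC) of rate $R$ in $\mathbb{F}_q^n$ is the column span of a generator matrix $\mathbf{G}\in\mathbb{F}_q^{n\times Rn}$ whose entries are independent and uniformly random elements of $\mathbb{F}_q$ (here $Rn$ is an integer). For $x\in\mathbb{F}_q^n$ and sets $S_1,\dots,S_n\subseteq\mathbb{F}_q$, the agreement set is $\{i\in[n]: x[i]\in S_i\}$. The $\rho$-radius $\ell$-list-recovery ball $B(\rho,S_1\times\cdots\times S_n)$, for sets $S_i$ of size $\ell$, is the set of $x\in\mathbb{F}_q^n$ whose agreement set with $S_1,\dots,S_n$ has size at least $(1-\rho)n$. A code $\mathcal{C}\subseteq\mathbb{F}_q^n$ is $(\rho,\ell,L)$-list-recoverable if every $\rho$-radius $\ell$-list-recovery ball contains at most $L$ codewords of $\mathcal{C}$. *)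

theory Defs
  imports Complex_Main "HOL-Library.Cardinality"
begin

text \<open>Vectors of F_q^n are modelled as functions nat => 'a that vanish outside {..<n};
  an n x k matrix as a function nat => nat => 'a vanishing outside {..<n} x {..<k}.\<close>

definition vecs :: "nat \<Rightarrow> (nat \<Rightarrow> 'a::zero) set" where
  "vecs n = {x. \<forall>i\<ge>n. x i = 0}"

definition mats :: "nat \<Rightarrow> nat \<Rightarrow> (nat \<Rightarrow> nat \<Rightarrow> 'a::zero) set" where
  "mats n k = {G. \<forall>i j. (n \<le> i \<or> k \<le> j) \<longrightarrow> G i j = 0}"

definition lin_code :: "nat \<Rightarrow> nat \<Rightarrow> (nat \<Rightarrow> nat \<Rightarrow> 'a::comm_semiring_1) \<Rightarrow> (nat \<Rightarrow> 'a) set" where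
  "lin_code n k G = (\<lambda>m. \<lambda>i. if i < n then (\<Sum>j<k. G i j * m j) else 0) ` vecs k"

definition lr_ball :: "nat \<Rightarrow> real \<Rightarrow> (nat \<Rightarrow> 'a set) \<Rightarrow> (nat \<Rightarrow> 'a::zero) set" where
  "lr_ball n \<rho> S = {x \<in> vecs n. real (card {i\<in>{..<n}. x i \<in> S i}) \<ge> (1 - \<rho>) * real n}"

definition list_recoverable :: "nat \<Rightarrow> real \<Rightarrow> nat \<Rightarrow> real \<Rightarrow> (nat \<Rightarrow> 'a::zero) set \<Rightarrow> bool" where
  "list_recoverable n \<rho> l L C \<longleftrightarrow>
     (\<forall>S :: nat \<Rightarrow> 'a set. (\<forall>i<n. card (S i) = l) \<longrightarrow> real (card (lr_ball n \<rho> S \<inter> C)) \<le> L)"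

end

theory Submission
  imports Defs "HOL-Library.FuncSet"
begin
definition dot :: "nat \<Rightarrow> (nat \<Rightarrow> 'a::comm_semiring_1) \<Rightarrow> (nat \<Rightarrow> 'a) \<Rightarrow> 'a" where
  "dot k g m = (\<Sum>j<k. g j * m j)"

lemma dot_add_left: "dot k (\<lambda>x. g x + c * h x) m = dot k g m + c * dot k h (m::nat \<Rightarrow> 'a::comm_ring_1)"
  by (simp add: dot_def algebra_simps sum.distrib sum_distrib_left)

lemma dot_diff_right: "dot k g (\<lambda>x. m x - m' x) = dot k g m - dot k g (m'::nat \<Rightarrow> 'a::comm_ring_1)"
  by (simp add: dot_def algebra_simps sum_subtractf)

lemma dot_zero_right[simp]: "dot k g (\<lambda>_. 0) = (0::'a::comm_semiring_1)"
  by (simp add: dot_def)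

lemma card_fun_set:
  assumes "finite I" "\<forall>i\<in>I. finite (U i)"
  shows "card {f. (\<forall>i\<in>I. f i \<in> U i) \<and> (\<forall>i. i \<notin> I \<longrightarrow> f i = z)} = (\<Prod>i\<in>I. card (U i))"
proof -
  let ?e = "\<lambda>f i. if i \<in> I then f i else z"
  have eq: "{f. (\<forall>i\<in>I. f i \<in> U i) \<and> (\<forall>i. i \<notin> I \<longrightarrow> f i = z)} = ?e ` PiE I U"
  proof (intro equalityI subsetI)
    fix f assume f: "f \<in> {f. (\<forall>i\<in>I. f i \<in> U i) \<and> (\<forall>i. i \<notin> I \<longrightarrow> f i = z)}"
    hence "f = ?e (restrict f I)" by (auto simp: fun_eq_iff restrict_apply)
    moreover have "restrict f I \<in> PiE I U" using f by auto
    ultimately show "f \<in> ?e ` PiE I U" by blast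
  qed auto
  have inj: "inj_on ?e (PiE I U)"
  proof (rule inj_onI)
    fix f g assume "f \<in> PiE I U" "g \<in> PiE I U" "?e f = ?e g"
    thus "f = g" by (metis (no_types, lifting) PiE_ext)
  qed
  show ?thesis unfolding eq card_image[OF inj] by (simp add: card_PiE assms(1))
qed

lemma card_vecs: "card (vecs k :: (nat \<Rightarrow> 'a::{finite,zero}) set) = CARD('a) ^ k"
proof -
  have "vecs k = {f::nat\<Rightarrow>'a. (\<forall>i\<in>{..<k}. f i \<in> UNIV) \<and> (\<forall>i. i \<notin> {..<k} \<longrightarrow> f i = 0)}"
    by (auto simp: vecs_def)
  moreover have "card {f::nat\<Rightarrow>'a. (\<forall>i\<in>{..<k}. f i \<in> UNIV) \<and> (\<forall>i. i \<notin> {..<k} \<longrightarrow> f i = 0)} = (\<Prod>i\<in>{..<k}. card (UNIV::'a set))"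
    by (rule card_fun_set) auto
  ultimately show ?thesis by simp
qed

lemma finite_vecs: "finite (vecs k :: (nat \<Rightarrow> 'a::{finite,zero}) set)"
proof -
  have "card (vecs k :: (nat \<Rightarrow> 'a) set) > 0" by (simp add: card_vecs)
  thus ?thesis using card_gt_0_iff by blast
qed

lemma mats_eq: "mats n k = {G. (\<forall>i\<in>{..<n}. G i \<in> vecs k) \<and> (\<forall>i. i \<notin> {..<n} \<longrightarrow> G i = (\<lambda>_. 0))}"
  by (auto simp: mats_def vecs_def fun_eq_iff)

lemma card_rows:
  assumes "\<forall>i<n. U i \<subseteq> (vecs k :: (nat \<Rightarrow> 'a::{finite,zero}) set)"
  shows "card {G \<in> mats n k. \<forall>i<n. G i \<in> U i} = (\<Prod>i<n. card (U i))"
proof -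
  have "{G \<in> mats n k. \<forall>i<n. G i \<in> U i} = {G. (\<forall>i\<in>{..<n}. G i \<in> U i) \<and> (\<forall>i. i \<notin> {..<n} \<longrightarrow> G i = (\<lambda>_. 0))}"
    using assms by (auto simp: mats_eq)
  moreover have "\<forall>i\<in>{..<n}. finite (U i)" using assms finite_vecs finite_subset by blast
  moreover have "card {G. (\<forall>i\<in>{..<n}. G i \<in> U i) \<and> (\<forall>i. i \<notin> {..<n} \<longrightarrow> G i = (\<lambda>_. 0))} = (\<Prod>i\<in>{..<n}. card (U i))"
    by (rule card_fun_set) (use \<open>\<forall>i\<in>{..<n}. finite (U i)\<close> in auto)
  ultimately show ?thesis by simp
qed

lemma card_mats: "card (mats n k :: (nat \<Rightarrow> nat \<Rightarrow> 'a::{finite,zero}) set) = (CARD('a) ^ k) ^ n"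
proof -
  have "{G \<in> mats n k. \<forall>i<n. G i \<in> vecs k} = (mats n k :: (nat \<Rightarrow> nat \<Rightarrow> 'a) set)" by (auto simp: mats_eq)
  thus ?thesis using card_rows[of n "\<lambda>_. vecs k :: (nat \<Rightarrow> 'a) set" k] by (simp add: card_vecs)
qed

lemma finite_mats: "finite (mats n k :: (nat \<Rightarrow> nat \<Rightarrow> 'a::{finite,zero}) set)"
proof -
  have "card (mats n k :: (nat \<Rightarrow> nat \<Rightarrow> 'a) set) > 0" by (simp add: card_mats)
  thus ?thesis using card_gt_0_iff by blast
qed

definition tri_h :: "nat \<Rightarrow> nat \<Rightarrow> (nat \<Rightarrow> nat \<Rightarrow> 'a::comm_semiring_1) \<Rightarrow> bool" where
  "tri_h k s d \<longleftrightarrow> (\<exists>hs. \<forall>jj\<in>{1..<s}. hs jj \<in> vecs k \<and> dot k (hs jj) (d jj) \<noteq> 0 \<and>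
      (\<forall>j'\<in>{1..<jj}. dot k (hs jj) (d j') = 0))"

lemma tri_surj:
  fixes d :: "nat \<Rightarrow> nat \<Rightarrow> 'a::field"
  assumes "tri_h k s d"
  shows "\<exists>g\<in>vecs k. \<forall>b\<in>{1..<s}. dot k g (d b) = u b"
proof -
  obtain hs where hs: "\<forall>jj\<in>{1..<s}. hs jj \<in> vecs k \<and> dot k (hs jj) (d jj) \<noteq> 0 \<and>
      (\<forall>j'\<in>{1..<jj}. dot k (hs jj) (d j') = 0)" using assms tri_h_def by blast
  have "m \<le> s \<Longrightarrow> \<exists>g\<in>vecs k. \<forall>b\<in>{1..<m}. dot k g (d b) = u b" for m
  proof (induction m)
    case 0
    show ?case by (rule bexI[of _ "\<lambda>_. 0"]) (auto simp: vecs_def)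
  next
    case (Suc m)
    then obtain g where g: "g \<in> vecs k" "\<forall>b\<in>{1..<m}. dot k g (d b) = u b" by auto
    show ?case
    proof (cases "m = 0")
      case True thus ?thesis using g by auto
    next
      case False
      hence m: "m \<in> {1..<s}" using Suc.prems by auto
      define c where "c = (u m - dot k g (d m)) / dot k (hs m) (d m)"
      define g' where "g' = (\<lambda>x. g x + c * hs m x)"
      have "g' \<in> vecs k" using g(1) hs m by (auto simp: vecs_def g'_def)
      moreover have "\<forall>b\<in>{1..<Suc m}. dot k g' (d b) = u b"
      proof
        fix b assume b: "b \<in> {1..<Suc m}"
        show "dot k g' (d b) = u b"
        proof (cases "b = m")
          case True
          have "dot k (hs m) (d m) \<noteq> 0" using hs m by auto
          thus ?thesis using True unfolding g'_def dot_add_left c_def by simp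
        next
          case False
          hence "b \<in> {1..<m}" using b by auto
          thus ?thesis using g hs m unfolding g'_def dot_add_left by auto
        qed
      qed
      ultimately show ?thesis by blast
    qed
  qed
  thus ?thesis by simp
qed

definition Wset :: "nat \<Rightarrow> (nat \<Rightarrow> nat \<Rightarrow> 'a::comm_semiring_1) \<Rightarrow> nat set \<Rightarrow> nat set \<Rightarrow> (nat \<Rightarrow> 'a) set" where
  "Wset k d A B = {g \<in> vecs k. \<forall>j\<in>B. dot k g (d j) \<in> (\<lambda>a. dot k g (d a)) ` A}"

lemma Wset_step:
  fixes d :: "nat \<Rightarrow> nat \<Rightarrow> 'a::{finite,field}"
  assumes h: "h \<in> vecs k" "dot k h (d j) = 1" "\<forall>b\<in>A\<union>B. dot k h (d b) = 0"
    and j: "j \<notin> A" "j \<notin> B" and A: "card A \<le> l" and Af: "finite A"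
  shows "CARD('a) * card (Wset k d A (insert j B)) \<le> l * card (Wset k d A B)"
proof -
  let ?W0 = "Wset k d A B" and ?W1 = "Wset k d A (insert j B)"
  define \<tau> where "\<tau> = (\<lambda>(c::'a) g x. g x + c * h x)"
  have dt: "dot k (\<tau> c g) (d b) = dot k g (d b)" if "b \<in> A \<union> B" for c g b
    using h(3) that unfolding \<tau>_def dot_add_left by simp
  have dtj: "dot k (\<tau> c g) (d j) = dot k g (d j) + c" for c g
    using h(2) unfolding \<tau>_def dot_add_left by simp
  have tv: "\<tau> c g \<in> vecs k \<longleftrightarrow> g \<in> vecs k" for c g
  proof
    assume "\<tau> c g \<in> vecs k" thus "g \<in> vecs k" using h(1) by (auto simp: vecs_def \<tau>_def)
  next
    assume "g \<in> vecs k" thus "\<tau> c g \<in> vecs k" using h(1) by (auto simp: vecs_def \<tau>_def)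
  qed
  have tinv: "\<tau> (-c) (\<tau> c g) = g" for c g by (auto simp: \<tau>_def fun_eq_iff algebra_simps)
  have tW0: "\<tau> c g \<in> ?W0 \<longleftrightarrow> g \<in> ?W0" for c g
  proof -
    have "\<forall>j'\<in>B. dot k (\<tau> c g) (d j') = dot k g (d j')" using dt by auto
    moreover have "(\<lambda>a. dot k (\<tau> c g) (d a)) ` A = (\<lambda>a. dot k g (d a)) ` A"
      using dt by (auto simp: image_def)
    ultimately show ?thesis unfolding Wset_def using tv by auto
  qed
  have W1sub: "?W1 \<subseteq> ?W0" unfolding Wset_def by auto
  have fin: "finite ?W0" "finite ?W1" using finite_vecs finite_subset unfolding Wset_def
    by (metis (no_types, lifting) mem_Collect_eq subsetI)+
  define P where "P = {(g, c). g \<in> ?W0 \<and> \<tau> c g \<in> ?W1}"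
  have bij: "bij_betw (\<lambda>(g, c). (\<tau> c g, c)) P (?W1 \<times> UNIV)"
  proof (rule bij_betw_byWitness[where f' = "\<lambda>(g, c). (\<tau> (-c) g, c)"])
    show "\<forall>a\<in>P. (\<lambda>(g, c). (\<tau> (- c) g, c)) ((\<lambda>(g, c). (\<tau> c g, c)) a) = a"
      using tinv by auto
    show "\<forall>a'\<in>?W1 \<times> UNIV. (\<lambda>(g, c). (\<tau> c g, c)) ((\<lambda>(g, c). (\<tau> (- c) g, c)) a') = a'"
    proof
      fix a' :: "(nat \<Rightarrow> 'a) \<times> 'a" assume "a' \<in> ?W1 \<times> UNIV"
      obtain g c where "a' = (g, c)" by fastforce
      thus "(\<lambda>(g, c). (\<tau> c g, c)) ((\<lambda>(g, c). (\<tau> (- c) g, c)) a') = a'"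
        using tinv[of "-c" g] by simp
    qed
    show "(\<lambda>(g, c). (\<tau> c g, c)) ` P \<subseteq> ?W1 \<times> UNIV" unfolding P_def by auto
    show "(\<lambda>(g, c). (\<tau> (- c) g, c)) ` (?W1 \<times> UNIV) \<subseteq> P"
    proof
      fix x assume "x \<in> (\<lambda>(g, c). (\<tau> (- c) g, c)) ` (?W1 \<times> UNIV)"
      then obtain g c where gc: "g \<in> ?W1" "x = (\<tau> (-c) g, c)" by auto
      have "\<tau> (-c) g \<in> ?W0" using tW0 gc W1sub by blast
      moreover have "\<tau> c (\<tau> (-c) g) = g" using tinv[of "-c" g] by simp
      ultimately show "x \<in> P" using gc unfolding P_def by auto
    qed
  qed
  hence "card P = card (?W1 \<times> (UNIV::'a set))" by (rule bij_betw_same_card)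
  hence "card P = card ?W1 * CARD('a)" by (simp add: card_cartesian_product)
  moreover have "card P \<le> l * card ?W0"
  proof -
    have Pe: "P = Sigma ?W0 (\<lambda>g. {c. \<tau> c g \<in> ?W1})" unfolding P_def by auto
    have "card {c. \<tau> c g \<in> ?W1} \<le> l" if g: "g \<in> ?W0" for g
    proof -
      have "{c. \<tau> c g \<in> ?W1} \<subseteq> (\<lambda>v. v - dot k g (d j)) ` ((\<lambda>a. dot k g (d a)) ` A)"
      proof
        fix c assume "c \<in> {c. \<tau> c g \<in> ?W1}"
        hence "dot k (\<tau> c g) (d j) \<in> (\<lambda>a. dot k (\<tau> c g) (d a)) ` A" unfolding Wset_def by auto
        hence "dot k g (d j) + c \<in> (\<lambda>a. dot k g (d a)) ` A" using dt dtj by auto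
        thus "c \<in> (\<lambda>v. v - dot k g (d j)) ` ((\<lambda>a. dot k g (d a)) ` A)"
          by (metis (no_types, lifting) add_diff_cancel_left' add.commute image_eqI)
      qed
      hence "card {c. \<tau> c g \<in> ?W1} \<le> card ((\<lambda>v. v - dot k g (d j)) ` ((\<lambda>a. dot k g (d a)) ` A))"
        by (intro card_mono) auto
      also have "\<dots> \<le> card A"
        using Af by (meson card_image_le finite_imageI le_trans)
      finally show ?thesis using A by simp
    qed
    hence "(\<Sum>g\<in>?W0. card {c. \<tau> c g \<in> ?W1}) \<le> (\<Sum>g\<in>?W0. l)" by (intro sum_mono) auto
    moreover have "card P = (\<Sum>g\<in>?W0. card {c. \<tau> c g \<in> ?W1})" unfolding Pe using fin by simp
    ultimately show ?thesis by (simp add: mult.commute)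
  qed
  ultimately show ?thesis by (simp add: mult.commute)
qed


lemma Wset_empty: "Wset k d A {} = vecs k" by (simp add: Wset_def)

lemma Wset_bound:
  fixes d :: "nat \<Rightarrow> nat \<Rightarrow> 'a::{finite,field}"
  assumes "finite B" "finite A" "A \<inter> B = {}" "card A \<le> l"
    and "\<forall>j\<in>B. \<exists>h\<in>vecs k. dot k h (d j) = 1 \<and> (\<forall>b\<in>A\<union>B. b \<noteq> j \<longrightarrow> dot k h (d b) = 0)"
  shows "card (Wset k d A B) * CARD('a)^card B \<le> l^card B * CARD('a)^k"
  using assms
proof (induction B rule: finite_induct)
  case empty
  thus ?case by (simp add: Wset_empty card_vecs)
next
  case (insert j B)
  have IH: "card (Wset k d A B) * CARD('a)^card B \<le> l^card B * CARD('a)^k"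
    using insert.IH insert.prems by blast
  obtain h where h: "h \<in> vecs k" "dot k h (d j) = 1" "\<forall>b\<in>A\<union>insert j B. b \<noteq> j \<longrightarrow> dot k h (d b) = 0"
    using insert.prems by blast
  have jA: "j \<notin> A" using insert.prems by auto
  have h3: "\<forall>b\<in>A\<union>B. dot k h (d b) = 0" using h(3) jA insert.hyps(2) by auto
  have step: "CARD('a) * card (Wset k d A (insert j B)) \<le> l * card (Wset k d A B)"
    by (rule Wset_step[OF h(1) h(2) h3 jA insert.hyps(2) insert.prems(3) insert.prems(1)])
  have "card (Wset k d A (insert j B)) * CARD('a)^card (insert j B)
      = (CARD('a) * card (Wset k d A (insert j B))) * CARD('a)^card B"
    using insert.hyps by simp
  also have "\<dots> \<le> (l * card (Wset k d A B)) * CARD('a)^card B"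
    using step by (rule mult_right_mono) simp
  also have "\<dots> = l * (card (Wset k d A B) * CARD('a)^card B)" by simp
  also have "\<dots> \<le> l * (l^card B * CARD('a)^k)" using IH by (rule mult_left_mono) simp
  also have "\<dots> = l^card (insert j B) * CARD('a)^k" using insert.hyps by simp
  finally show ?case .
qed

lemma row_bound:
  fixes d :: "nat \<Rightarrow> nat \<Rightarrow> 'a::{finite,field}"
  assumes "tri_h k s d" "d 0 = (\<lambda>_. 0)" "A \<subseteq> {..<s}" "B \<subseteq> {1..<s}" "A \<inter> B = {}" "card A \<le> l"
  shows "card (Wset k d A B) * CARD('a)^card B \<le> l^card B * CARD('a)^k"
proof (rule Wset_bound)
  show "finite B" using assms(4) finite_subset by blast
  show "finite A" using assms(3) finite_subset by blast
  show "A \<inter> B = {}" "card A \<le> l" using assms by auto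
  show "\<forall>j\<in>B. \<exists>h\<in>vecs k. dot k h (d j) = 1 \<and> (\<forall>b\<in>A\<union>B. b \<noteq> j \<longrightarrow> dot k h (d b) = 0)"
  proof
    fix j assume j: "j \<in> B"
    obtain h where h: "h \<in> vecs k" "\<forall>b\<in>{1..<s}. dot k h (d b) = (if b = j then 1 else 0)"
      using tri_surj[OF assms(1), of "\<lambda>b. if b = j then 1 else 0"] by blast
    have "j \<in> {1..<s}" using j assms(4) by auto
    hence "dot k h (d j) = 1" using h by simp
    moreover have "\<forall>b\<in>A\<union>B. b \<noteq> j \<longrightarrow> dot k h (d b) = 0"
    proof (intro ballI impI)
      fix b assume b: "b \<in> A \<union> B" "b \<noteq> j"
      show "dot k h (d b) = 0"
      proof (cases "b = 0")
        case True thus ?thesis using assms(2) by simp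
      next
        case False
        hence "b \<in> {1..<s}" using b assms(3,4) by auto
        thus ?thesis using h b by simp
      qed
    qed
    ultimately show "\<exists>h\<in>vecs k. dot k h (d j) = 1 \<and> (\<forall>b\<in>A\<union>B. b \<noteq> j \<longrightarrow> dot k h (d b) = 0)"
      using h(1) by blast
  qed
qed

definition tri :: "nat \<Rightarrow> (nat \<Rightarrow> 'a) set \<Rightarrow> nat \<Rightarrow> bool" where
  "tri n X s \<longleftrightarrow> (\<exists>a p. (\<forall>j<s. a j \<in> X) \<and> (\<forall>jj\<in>{1..<s}. p jj < n \<and> a jj (p jj) \<noteq> a 0 (p jj) \<and>
      (\<forall>j'\<in>{1..<jj}. a j' (p jj) = a 0 (p jj))))"

lemma card_filter_sum: "finite I \<Longrightarrow> card {i\<in>I. Q i} = (\<Sum>i\<in>I. if Q i then 1 else (0::nat))"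
proof -
  assume "finite I"
  thus ?thesis using sum.inter_filter[of I "\<lambda>_. (1::nat)" Q] by simp
qed

lemma double_count:
  assumes "finite X" "finite I"
  shows "(\<Sum>u\<in>X. card {i\<in>I. Q u i}) = (\<Sum>i\<in>I. card {u\<in>X. Q u i})"
proof -
  have "(\<Sum>u\<in>X. card {i\<in>I. Q u i}) = (\<Sum>u\<in>X. \<Sum>i\<in>I. if Q u i then 1 else (0::nat))"
    using assms by (simp add: card_filter_sum)
  also have "\<dots> = (\<Sum>i\<in>I. \<Sum>u\<in>X. if Q u i then 1 else (0::nat))" by (rule sum.swap)
  also have "\<dots> = (\<Sum>i\<in>I. card {u\<in>X. Q u i})"
    using assms by (simp add: card_filter_sum)
  finally show ?thesis .
qed

lemma tri_extend:
  assumes "tri n {x\<in>X. x i = v} m" "1 \<le> m" "i < n" "w \<in> X" "w i \<noteq> v"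
  shows "tri n X (Suc m)"
proof -
  obtain a p where ap: "\<forall>j<m. a j \<in> {x\<in>X. x i = v}"
    "\<forall>jj\<in>{1..<m}. p jj < n \<and> a jj (p jj) \<noteq> a 0 (p jj) \<and> (\<forall>j'\<in>{1..<jj}. a j' (p jj) = a 0 (p jj))"
    using assms(1) unfolding tri_def by blast
  define a' where "a' = a(m := w)"
  define p' where "p' = p(m := i)"
  have a0: "a' 0 = a 0" using assms(2) by (simp add: a'_def)
  have a0i: "a 0 i = v" using ap(1) assms(2) by auto
  have "\<forall>j<Suc m. a' j \<in> X" using ap(1) assms(4) by (auto simp: a'_def less_Suc_eq)
  moreover have "\<forall>jj\<in>{1..<Suc m}. p' jj < n \<and> a' jj (p' jj) \<noteq> a' 0 (p' jj) \<and>
      (\<forall>j'\<in>{1..<jj}. a' j' (p' jj) = a' 0 (p' jj))"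
  proof
    fix jj assume jj: "jj \<in> {1..<Suc m}"
    show "p' jj < n \<and> a' jj (p' jj) \<noteq> a' 0 (p' jj) \<and> (\<forall>j'\<in>{1..<jj}. a' j' (p' jj) = a' 0 (p' jj))"
    proof (cases "jj = m")
      case True
      have "\<forall>j'\<in>{1..<m}. a j' i = v" using ap(1) by auto
      thus ?thesis using True a0 a0i assms(3,5) by (auto simp: a'_def p'_def)
    next
      case False
      hence "jj \<in> {1..<m}" using jj by auto
      thus ?thesis using ap(2) a0 False by (auto simp: a'_def p'_def)
    qed
  qed
  ultimately show ?thesis unfolding tri_def by blast
qed

lemma vecs_diff_lt:
  assumes "x \<in> vecs n" "y \<in> vecs n" "x i \<noteq> y i" shows "i < n"
proof (rule ccontr)
  assume "\<not> i < n"
  hence "x i = 0" "y i = 0" using assms(1,2) by (auto simp: vecs_def)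
  thus False using assms(3) by simp
qed

lemma tri_two:
  assumes "X \<subseteq> vecs n" "x \<in> X" "y \<in> X" "x \<noteq> y"
  shows "tri n X 2"
proof -
  obtain i where i: "x i \<noteq> y i" using assms(4) by (auto simp: fun_eq_iff)
  have "x \<in> vecs n" "y \<in> vecs n" using assms by auto
  hence "i < n" using i vecs_diff_lt by blast
  define a where "a = (\<lambda>j::nat. if j = 0 then x else y)"
  have e: "{1..<2::nat} = {1}" by auto
  have "\<forall>j<2. a j \<in> X" using assms by (auto simp: a_def)
  moreover have "\<forall>jj\<in>{1..<2}. (\<lambda>_. i) jj < n \<and> a jj ((\<lambda>_. i) jj) \<noteq> a 0 ((\<lambda>_. i) jj) \<and>
      (\<forall>j'\<in>{1..<jj}. a j' ((\<lambda>_. i) jj) = a 0 ((\<lambda>_. i) jj))"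
    unfolding e using i \<open>i < n\<close> by (simp add: a_def)
  ultimately show ?thesis unfolding tri_def by (intro exI[of _ a] exI[of _ "\<lambda>_. i"]) simp
qed

lemma det_bound:
  fixes P :: "(nat \<Rightarrow> 'a::{finite,zero}) set" and S :: "nat \<Rightarrow> 'a set"
  assumes P: "P \<subseteq> vecs n"
    and agree: "\<forall>x\<in>P. real (card {i\<in>{..<n}. x i \<in> S i}) \<ge> t"
    and Sl: "\<forall>i<n. card (S i) \<le> l"
    and dist: "\<forall>x\<in>P. \<forall>y\<in>P. x \<noteq> y \<longrightarrow> real (card {i\<in>{..<n}. x i = y i}) \<le> z"
    and gap: "t - z \<ge> c * real n" and c: "c > 0" and K: "K = real l / c" "K \<ge> 1"
  shows "X \<subseteq> P \<Longrightarrow> \<not> tri n X (j + 2) \<Longrightarrow> real (card X) \<le> K ^ j"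
proof (induction j arbitrary: X)
  case 0
  have "card X \<le> 1"
  proof (rule ccontr)
    assume "\<not> card X \<le> 1"
    then obtain x y where "x \<in> X" "y \<in> X" "x \<noteq> y"
      by (metis One_nat_def card.infinite card_le_Suc0_iff_eq le_0_eq zero_le_one)
    hence "tri n X 2" using tri_two 0 P by blast
    thus False using 0 by (simp add: numeral_2_eq_2)
  qed
  thus ?case by simp
next
  case (Suc j)
  have finP: "finite P" using P finite_vecs finite_subset by blast
  hence finX: "finite X" using Suc.prems(1) finite_subset by blast
  show ?case
  proof (cases "card X \<le> 1")
    case True
    have "(1::real) \<le> K ^ Suc j" using K(2) by (rule one_le_power)
    moreover have "real (card X) \<le> 1" using True by simp
    ultimately show ?thesis by linarith
  next
    case False
    then obtain x y where xy: "x \<in> X" "y \<in> X" "x \<noteq> y"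
      by (metis One_nat_def card.infinite card_le_Suc0_iff_eq le_0_eq zero_le_one)
    define Z where "Z = {i\<in>{..<n}. \<forall>u\<in>X. \<forall>v\<in>X. u i = v i}"
    have "Z \<subseteq> {i\<in>{..<n}. x i = y i}" using xy unfolding Z_def by auto
    hence "card Z \<le> card {i\<in>{..<n}. x i = y i}" by (intro card_mono) auto
    moreover have "real (card {i\<in>{..<n}. x i = y i}) \<le> z" using dist xy Suc.prems(1) by blast
    ultimately have Zz: "real (card Z) \<le> z" by linarith
    obtain i0 where i0: "x i0 \<noteq> y i0" using xy(3) by (auto simp: fun_eq_iff)
    have "x \<in> vecs n" "y \<in> vecs n" using xy P Suc.prems(1) by auto
    hence "i0 < n" using i0 vecs_diff_lt by blast
    hence npos: "real n > 0" by simp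
    have slice: "real (card {u\<in>X. u i = v}) \<le> K ^ j" if i: "i \<in> {..<n} - Z" for i v
    proof -
      obtain u1 u2 where u: "u1 \<in> X" "u2 \<in> X" "u1 i \<noteq> u2 i" using i unfolding Z_def by auto
      obtain w where w: "w \<in> X" "w i \<noteq> v"
      proof (cases "u1 i = v")
        case True thus ?thesis using that[of u2] u by auto
      next
        case False thus ?thesis using that[of u1] u by auto
      qed
      have "\<not> tri n {u\<in>X. u i = v} (j + 2)"
      proof
        assume "tri n {u\<in>X. u i = v} (j + 2)"
        hence "tri n X (Suc (j + 2))" using tri_extend[of n X i v "j+2" w] w i by auto
        thus False using Suc.prems(2) by simp
      qed
      moreover have "{u\<in>X. u i = v} \<subseteq> P" using Suc.prems(1) by auto
      ultimately show ?thesis using Suc.IH by blast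
    qed
    have colbound: "real (card {u\<in>X. u i \<in> S i}) \<le> real l * K ^ j" if i: "i \<in> {..<n} - Z" for i
    proof -
      have "{u\<in>X. u i \<in> S i} = (\<Union>v\<in>S i. {u\<in>X. u i = v})" by auto
      hence "card {u\<in>X. u i \<in> S i} \<le> (\<Sum>v\<in>S i. card {u\<in>X. u i = v})"
        by (simp add: card_UN_le)
      hence "real (card {u\<in>X. u i \<in> S i}) \<le> (\<Sum>v\<in>S i. real (card {u\<in>X. u i = v}))"
        by (simp only: of_nat_sum[symmetric] of_nat_le_iff)
      also have "\<dots> \<le> (\<Sum>v\<in>S i. K ^ j)" using slice[OF i] by (intro sum_mono) auto
      also have "\<dots> = real (card (S i)) * K ^ j" by simp
      also have "\<dots> \<le> real l * K ^ j" using Sl i K(2) by (intro mult_right_mono) auto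
      finally show ?thesis .
    qed
    have lower: "real (card X) * (c * real n) \<le> (\<Sum>u\<in>X. real (card {i\<in>{..<n} - Z. u i \<in> S i}))"
    proof -
      have "c * real n \<le> real (card {i\<in>{..<n} - Z. u i \<in> S i})" if u: "u \<in> X" for u
      proof -
        have "{i\<in>{..<n}. u i \<in> S i} \<subseteq> {i\<in>{..<n} - Z. u i \<in> S i} \<union> Z" by auto
        hence "card {i\<in>{..<n}. u i \<in> S i} \<le> card ({i\<in>{..<n} - Z. u i \<in> S i} \<union> Z)"
          by (intro card_mono) (auto simp: Z_def)
        also have "\<dots> \<le> card {i\<in>{..<n} - Z. u i \<in> S i} + card Z" by (rule card_Un_le)
        finally have "real (card {i\<in>{..<n}. u i \<in> S i}) \<le> real (card {i\<in>{..<n} - Z. u i \<in> S i}) + real (card Z)"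
          by linarith
        moreover have "real (card {i\<in>{..<n}. u i \<in> S i}) \<ge> t" using agree u Suc.prems(1) by auto
        ultimately show ?thesis using Zz gap by linarith
      qed
      hence "(\<Sum>u\<in>X. c * real n) \<le> (\<Sum>u\<in>X. real (card {i\<in>{..<n} - Z. u i \<in> S i}))"
        by (intro sum_mono) auto
      thus ?thesis by (simp add: mult.commute)
    qed
    have "(\<Sum>u\<in>X. card {i\<in>{..<n} - Z. u i \<in> S i}) = (\<Sum>i\<in>{..<n} - Z. card {u\<in>X. u i \<in> S i})"
      by (rule double_count) (auto simp: finX)
    hence "(\<Sum>u\<in>X. real (card {i\<in>{..<n} - Z. u i \<in> S i})) = (\<Sum>i\<in>{..<n} - Z. real (card {u\<in>X. u i \<in> S i}))"
      by (simp only: of_nat_sum[symmetric] of_nat_eq_iff)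
    also have "\<dots> \<le> (\<Sum>i\<in>{..<n} - Z. real l * K ^ j)" using colbound by (intro sum_mono) auto
    also have "\<dots> = real (card ({..<n} - Z)) * (real l * K ^ j)" by simp
    also have "\<dots> \<le> real n * (real l * K ^ j)"
    proof (rule mult_right_mono)
      show "real (card ({..<n} - Z)) \<le> real n"
        using card_mono[of "{..<n}" "{..<n} - Z"] by auto
      show "0 \<le> real l * K ^ j" using K(2) by simp
    qed
    finally have "real (card X) * (c * real n) \<le> real n * (real l * K ^ j)" using lower by linarith
    hence "real (card X) * c \<le> real l * K ^ j" using npos
      by (simp add: mult.commute mult.left_commute)
    hence "real (card X) \<le> real l * K ^ j / c" using c by (simp add: field_simps)
    also have "\<dots> = K ^ Suc j" using K(1) by simp
    finally show ?thesis .
  qed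
qed

definition PS :: "nat \<Rightarrow> nat \<Rightarrow> (nat set \<times> nat set) set" where
  "PS s l = {(A, B). A \<subseteq> {..<s} \<and> card A \<le> l \<and> B \<subseteq> {1..<s} \<and> A \<inter> B = {}}"

lemma PS_sub: "PS s l \<subseteq> Pow {..<s} \<times> Pow {..<s}"
  unfolding PS_def by auto

lemma finite_PS: "finite (PS s l)"
  by (rule finite_subset[OF PS_sub]) auto

lemma card_PS: "real (card (PS s l)) \<le> 2 ^ s * (1 + real s / 2) ^ l"
proof -
  define As where "As = {A. A \<subseteq> {..<s} \<and> card A \<le> l}"
  have finAs: "finite As" unfolding As_def by (rule finite_subset[of _ "Pow {..<s}"]) auto
  have "PS s l \<subseteq> Sigma As (\<lambda>A. Pow ({..<s} - A))" unfolding PS_def As_def by auto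
  hence "card (PS s l) \<le> card (Sigma As (\<lambda>A. Pow ({..<s} - A)))"
    by (intro card_mono) (auto intro!: finite_SigmaI finAs)
  also have "\<dots> = (\<Sum>A\<in>As. 2 ^ card ({..<s} - A))"
    using finAs by (simp add: card_Pow)
  also have "\<dots> = (\<Sum>A\<in>As. 2 ^ (s - card A))"
  proof (rule sum.cong)
    fix A assume "A \<in> As"
    hence "A \<subseteq> {..<s}" unfolding As_def by auto
    thus "2 ^ card ({..<s} - A) = (2::nat) ^ (s - card A)"
      by (simp add: card_Diff_subset finite_subset)
  qed simp
  also have "\<dots> = (\<Sum>a\<le>l. (s choose a) * 2 ^ (s - a))"
  proof -
    have As_eq: "As = (\<Union>a\<in>{..l}. {A. A \<subseteq> {..<s} \<and> card A = a})" unfolding As_def by auto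
    have "(\<Sum>A\<in>As. 2 ^ (s - card A)) = (\<Sum>a\<le>l. \<Sum>A\<in>{A. A \<subseteq> {..<s} \<and> card A = a}. (2::nat) ^ (s - card A))"
      unfolding As_eq
    proof (rule sum.UNION_disjoint)
      show "finite {..l}" by simp
      show "\<forall>i\<in>{..l}. finite {A. A \<subseteq> {..<s} \<and> card A = i}"
        by (auto intro: finite_subset[of _ "Pow {..<s}"])
      show "\<forall>i\<in>{..l}. \<forall>j\<in>{..l}. i \<noteq> j \<longrightarrow> {A. A \<subseteq> {..<s} \<and> card A = i} \<inter> {A. A \<subseteq> {..<s} \<and> card A = j} = {}"
        by auto
    qed
    also have "\<dots> = (\<Sum>a\<le>l. (s choose a) * 2 ^ (s - a))"
    proof (rule sum.cong)
      fix a assume "a \<in> {..l}"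
      have "(\<Sum>A\<in>{A. A \<subseteq> {..<s} \<and> card A = a}. (2::nat) ^ (s - card A))
          = (\<Sum>A\<in>{A. A \<subseteq> {..<s} \<and> card A = a}. 2 ^ (s - a))" by (rule sum.cong) auto
      also have "\<dots> = card {A. A \<subseteq> {..<s} \<and> card A = a} * 2 ^ (s - a)" by simp
      also have "\<dots> = (s choose a) * 2 ^ (s - a)" using n_subsets[of "{..<s}" a] by simp
      finally show "(\<Sum>A\<in>{A. A \<subseteq> {..<s} \<and> card A = a}. (2::nat) ^ (s - card A)) = (s choose a) * 2 ^ (s - a)" .
    qed simp
    finally show ?thesis .
  qed
  finally have c1: "real (card (PS s l)) \<le> (\<Sum>a\<le>l. real (s choose a) * 2 ^ (s - a))"
    by (metis (mono_tags, lifting) of_nat_le_iff of_nat_mult of_nat_numeral of_nat_power of_nat_sum sum.cong)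
  also have "\<dots> \<le> (\<Sum>a\<le>l. 2 ^ s * (real (l choose a) * (real s / 2) ^ a * 1 ^ (l - a)))"
  proof (rule sum_mono)
    fix a assume a: "a \<in> {..l}"
    show "real (s choose a) * 2 ^ (s - a) \<le> 2 ^ s * (real (l choose a) * (real s / 2) ^ a * 1 ^ (l - a))"
    proof (cases "a \<le> s")
      case False
      hence "real (s choose a) = 0" by (simp add: binomial_eq_0)
      moreover have "0 \<le> 2 ^ s * (real (l choose a) * (real s / 2) ^ a * 1 ^ (l - a))" by simp
      ultimately show ?thesis by (simp only: mult_zero_left)
    next
      case True
      have "s choose a \<le> s ^ a" using True by (rule binomial_le_pow)
      moreover have "1 \<le> l choose a" using a by (simp add: Suc_leI zero_less_binomial)
      ultimately have "real (s choose a) \<le> real (l choose a) * real s ^ a"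
        by (metis le_trans mult_le_mono1 nat_mult_1 of_nat_le_iff of_nat_mult of_nat_power)
      hence "real (s choose a) * 2 ^ (s - a) \<le> real (l choose a) * real s ^ a * 2 ^ (s - a)"
        by (rule mult_right_mono) simp
      also have "\<dots> = 2 ^ s * (real (l choose a) * (real s / 2) ^ a * 1 ^ (l - a))"
      proof -
        have "(2::real) ^ s = 2 ^ (s - a) * 2 ^ a" using True by (metis le_add_diff_inverse2 power_add)
        thus ?thesis by (simp add: power_divide field_simps)
      qed
      finally show ?thesis .
    qed
  qed
  also have "\<dots> = 2 ^ s * (real s / 2 + 1) ^ l"
    by (simp add: binomial_ring[of "real s / 2" 1 l] sum_distrib_left)
  finally show ?thesis by (simp add: add.commute)
qed

lemma finite_fun_set:
  assumes "finite I" "\<forall>i\<in>I. finite (U i)"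
  shows "finite {f. (\<forall>i\<in>I. f i \<in> U i) \<and> (\<forall>i. i \<notin> I \<longrightarrow> f i = z)}"
proof -
  have "{f. (\<forall>i\<in>I. f i \<in> U i) \<and> (\<forall>i. i \<notin> I \<longrightarrow> f i = z)} \<subseteq> (\<lambda>f i. if i \<in> I then f i else z) ` PiE I U"
  proof
    fix f assume f: "f \<in> {f. (\<forall>i\<in>I. f i \<in> U i) \<and> (\<forall>i. i \<notin> I \<longrightarrow> f i = z)}"
    hence "f = (\<lambda>i. if i \<in> I then restrict f I i else z)" by (auto simp: fun_eq_iff)
    moreover have "restrict f I \<in> PiE I U" using f by auto
    ultimately show "f \<in> (\<lambda>f i. if i \<in> I then f i else z) ` PiE I U" by blast
  qed
  moreover have "finite ((\<lambda>f i. if i \<in> I then f i else z) ` PiE I U)"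
    using assms by (intro finite_imageI finite_PiE) auto
  ultimately show ?thesis by (rule finite_subset)
qed

definition Dset :: "nat \<Rightarrow> nat \<Rightarrow> (nat \<Rightarrow> nat \<Rightarrow> 'a::zero) set" where
  "Dset k s = {d. (\<forall>j\<in>{1..<s}. d j \<in> vecs k) \<and> (\<forall>j. j \<notin> {1..<s} \<longrightarrow> d j = (\<lambda>_. 0))}"

definition Pats :: "nat \<Rightarrow> nat \<Rightarrow> nat \<Rightarrow> real \<Rightarrow> (nat \<Rightarrow> nat set \<times> nat set) set" where
  "Pats n s l t = {P. (\<forall>i\<in>{..<n}. P i \<in> PS s l) \<and> (\<forall>i. i \<notin> {..<n} \<longrightarrow> P i = ({}, {})) \<and>
      real (\<Sum>i<n. card (snd (P i))) \<ge> real s * t - real l * real n}"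

definition Ev :: "nat \<Rightarrow> nat \<Rightarrow> nat \<Rightarrow> (nat \<Rightarrow> nat \<Rightarrow> 'a::comm_semiring_1) \<Rightarrow> (nat \<Rightarrow> nat set \<times> nat set)
    \<Rightarrow> (nat \<Rightarrow> nat \<Rightarrow> 'a) set" where
  "Ev n k s d P = {G \<in> mats n k. tri_h k s d \<and> (\<forall>i<n. G i \<in> Wset k d (fst (P i)) (snd (P i)))}"

lemma card_Dset: "card (Dset k s :: (nat \<Rightarrow> nat \<Rightarrow> 'a::{finite,zero}) set) = (CARD('a) ^ k) ^ (s - 1)"
proof -
  have "card (Dset k s :: (nat \<Rightarrow> nat \<Rightarrow> 'a) set) = (\<Prod>j\<in>{1..<s}. card (vecs k :: (nat \<Rightarrow> 'a) set))"
    unfolding Dset_def by (rule card_fun_set) (auto simp: finite_vecs)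
  thus ?thesis by (simp add: card_vecs)
qed

lemma finite_Dset: "finite (Dset k s :: (nat \<Rightarrow> nat \<Rightarrow> 'a::{finite,zero}) set)"
  unfolding Dset_def by (rule finite_fun_set) (auto simp: finite_vecs)

lemma Pats_sub: "Pats n s l t \<subseteq> {P. (\<forall>i\<in>{..<n}. P i \<in> PS s l) \<and> (\<forall>i. i \<notin> {..<n} \<longrightarrow> P i = ({}, {}))}"
  unfolding Pats_def by auto

lemma finite_Pats: "finite (Pats n s l t)"
  by (rule finite_subset[OF Pats_sub], rule finite_fun_set) (auto simp: finite_PS)

lemma card_Pats: "card (Pats n s l t) \<le> card (PS s l) ^ n"
proof -
  have "card (Pats n s l t) \<le> card {P. (\<forall>i\<in>{..<n}. P i \<in> PS s l) \<and> (\<forall>i. i \<notin> {..<n} \<longrightarrow> P i = ({}, {}))}"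
    by (rule card_mono[OF _ Pats_sub], rule finite_fun_set) (auto simp: finite_PS)
  also have "\<dots> = (\<Prod>i\<in>{..<n}. card (PS s l))" by (rule card_fun_set) (auto simp: finite_PS)
  finally show ?thesis by simp
qed

lemma Ev_card:
  fixes d :: "nat \<Rightarrow> nat \<Rightarrow> 'a::{finite,field}"
  assumes d: "d \<in> Dset k s" and P: "P \<in> Pats n s l t" and l: "0 < l" "l \<le> CARD('a)"
  shows "real (card (Ev n k s d P)) \<le> real CARD('a) ^ (k * n) * (real l / real CARD('a)) powr (real s * t - real l * real n)"
proof (cases "tri_h k s d")
  case False
  hence "Ev n k s d P = {}" unfolding Ev_def by auto
  thus ?thesis by simp
next
  case True
  let ?q = "real CARD('a)"
  have qpos: "?q > 0" by simp
  define W where "W = (\<lambda>i. Wset k d (fst (P i)) (snd (P i)))"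
  have Wsub: "\<forall>i<n. W i \<subseteq> vecs k" unfolding W_def Wset_def by auto
  have "Ev n k s d P = {G \<in> mats n k. \<forall>i<n. G i \<in> W i}" unfolding Ev_def W_def using True by auto
  hence "card (Ev n k s d P) = (\<Prod>i<n. card (W i))" using card_rows[OF Wsub] by simp
  hence "real (card (Ev n k s d P)) = (\<Prod>i<n. real (card (W i)))" by simp
  also have "\<dots> \<le> (\<Prod>i<n. ?q ^ k * (real l / ?q) ^ card (snd (P i)))"
  proof (rule prod_mono)
    fix i assume i: "i \<in> {..<n}"
    obtain A B where AB: "P i = (A, B)" by fastforce
    have "P i \<in> PS s l" using P i unfolding Pats_def by auto
    hence ABp: "A \<subseteq> {..<s}" "B \<subseteq> {1..<s}" "A \<inter> B = {}" "card A \<le> l" using AB unfolding PS_def by auto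
    have d0: "d 0 = (\<lambda>_. 0)" using d unfolding Dset_def by auto
    have rb: "card (W i) * CARD('a) ^ card B \<le> l ^ card B * CARD('a) ^ k"
      unfolding W_def AB using row_bound[OF True d0 ABp(1-4)] by simp
    hence "real (card (W i)) * ?q ^ card B \<le> real l ^ card B * ?q ^ k"
      by (metis of_nat_le_iff of_nat_mult of_nat_power)
    hence "real (card (W i)) \<le> real l ^ card B * ?q ^ k / ?q ^ card B"
      using qpos by (simp add: field_simps)
    also have "\<dots> = ?q ^ k * (real l / ?q) ^ card B" by (simp add: power_divide)
    finally show "0 \<le> real (card (W i)) \<and> real (card (W i)) \<le> ?q ^ k * (real l / ?q) ^ card (snd (P i))"
      using AB by simp
  qed
  also have "\<dots> = (?q ^ k) ^ n * (real l / ?q) ^ (\<Sum>i<n. card (snd (P i)))"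
    by (simp add: prod.distrib power_sum)
  also have "\<dots> = ?q ^ (k * n) * (real l / ?q) powr real (\<Sum>i<n. card (snd (P i)))"
  proof -
    have "real l / ?q > 0" using l by simp
    hence "(real l / ?q) powr real (\<Sum>i<n. card (snd (P i))) = (real l / ?q) ^ (\<Sum>i<n. card (snd (P i)))"
      by (rule powr_realpow)
    thus ?thesis by (simp add: power_mult)
  qed
  also have "\<dots> \<le> ?q ^ (k * n) * (real l / ?q) powr (real s * t - real l * real n)"
  proof (rule mult_left_mono)
    have "real s * t - real l * real n \<le> real (\<Sum>i<n. card (snd (P i)))" using P unfolding Pats_def by auto
    moreover have "real l / ?q \<le> 1" using l by simp
    ultimately show "(real l / ?q) powr real (\<Sum>i<n. card (snd (P i))) \<le> (real l / ?q) powr (real s * t - real l * real n)"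
      by (intro powr_mono') auto
  qed simp
  finally show ?thesis .
qed

lemma lin_code_eq: "lin_code n k (G :: nat \<Rightarrow> nat \<Rightarrow> 'a::comm_semiring_1) = (\<lambda>m i. if i < n then dot k (G i) m else 0) ` vecs k"
  unfolding lin_code_def dot_def ..

lemma lin_code_enc: "x \<in> lin_code n k (G :: nat \<Rightarrow> nat \<Rightarrow> 'a::comm_semiring_1) \<longleftrightarrow> (\<exists>m\<in>vecs k. x = (\<lambda>i. if i < n then dot k (G i) m else 0))"
  unfolding lin_code_eq by auto

lemma mats_row: "G \<in> mats n k \<Longrightarrow> i < n \<Longrightarrow> G i \<in> vecs k"
  by (auto simp: mats_def vecs_def)

lemma E2_cover:
  fixes G :: "nat \<Rightarrow> nat \<Rightarrow> 'a::{finite,field}"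
  assumes G: "G \<in> mats n k" and S: "\<forall>i<n. card (S i) = l"
    and tr: "tri n (lr_ball n \<rho> S \<inter> lin_code n k G) s" and s1: "1 \<le> s"
  shows "\<exists>d\<in>Dset k s. \<exists>P\<in>Pats n s l ((1 - \<rho>) * real n). G \<in> Ev n k s d P"
proof -
  obtain a p where ap: "\<forall>j<s. a j \<in> lr_ball n \<rho> S \<inter> lin_code n k G"
    "\<forall>jj\<in>{1..<s}. p jj < n \<and> a jj (p jj) \<noteq> a 0 (p jj) \<and> (\<forall>j'\<in>{1..<jj}. a j' (p jj) = a 0 (p jj))"
    using tr unfolding tri_def by blast
  have "\<forall>j<s. \<exists>m\<in>vecs k. a j = (\<lambda>i. if i < n then dot k (G i) m else 0)" using ap(1) lin_code_enc by blast
  then obtain mm where mm: "\<forall>j<s. mm j \<in> vecs k \<and> a j = (\<lambda>i. if i < n then dot k (G i) (mm j) else 0)"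
    by metis
  define d where "d = (\<lambda>j. if j \<in> {1..<s} then (\<lambda>x. mm j x - mm 0 x) else (\<lambda>_. 0::'a))"
  have ad: "a j i - a 0 i = dot k (G i) (d j)" if "j < s" "i < n" for j i
  proof (cases "j \<in> {1..<s}")
    case True
    have "a j i = dot k (G i) (mm j)" "a 0 i = dot k (G i) (mm 0)" using mm that s1 by auto
    thus ?thesis using True by (simp add: d_def dot_diff_right)
  next
    case False
    hence "j = 0" using that by auto
    thus ?thesis by (simp add: d_def)
  qed
  have dD: "d \<in> Dset k s"
  proof -
    have "d j \<in> vecs k" if "j \<in> {1..<s}" for j
    proof -
      have "mm j \<in> vecs k" "mm 0 \<in> vecs k" using mm that s1 by auto
      thus ?thesis using that by (auto simp: d_def vecs_def)
    qed
    thus ?thesis unfolding Dset_def d_def by auto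
  qed
  have trh: "tri_h k s d" unfolding tri_h_def
  proof (rule exI[of _ "\<lambda>jj. G (p jj)"], rule ballI)
    fix jj assume jj: "jj \<in> {1..<s}"
    have pn: "p jj < n" using ap(2) jj by auto
    have c1: "G (p jj) \<in> vecs k" using mats_row[OF G pn] .
    have c2: "dot k (G (p jj)) (d jj) \<noteq> 0" using ad[of jj "p jj"] pn jj ap(2) by auto
    have c3: "\<forall>j'\<in>{1..<jj}. dot k (G (p jj)) (d j') = 0"
    proof
      fix j' assume j': "j' \<in> {1..<jj}"
      hence "a j' (p jj) = a 0 (p jj)" using ap(2) jj by auto
      moreover have "j' < s" using j' jj by auto
      ultimately show "dot k (G (p jj)) (d j') = 0" using ad[of j' "p jj"] pn by auto
    qed
    show "G (p jj) \<in> vecs k \<and> dot k (G (p jj)) (d jj) \<noteq> 0 \<and> (\<forall>j'\<in>{1..<jj}. dot k (G (p jj)) (d j') = 0)"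
      using c1 c2 c3 by blast
  qed
  define J where "J = (\<lambda>i. {j\<in>{..<s}. a j i \<in> S i})"
  define A where "A = (\<lambda>i. {j\<in>J i. \<forall>j'\<in>J i. j' < j \<longrightarrow> a j' i \<noteq> a j i})"
  define B where "B = (\<lambda>i. J i - A i)"
  define P where "P = (\<lambda>i. if i < n then (A i, B i) else ({}, {}))"
  have AJ: "A i \<subseteq> J i" for i unfolding A_def by auto
  have finJ: "finite (J i)" for i unfolding J_def by auto
  have cardA: "card (A i) \<le> l" if i: "i < n" for i
  proof -
    have inj: "inj_on (\<lambda>j. a j i) (A i)"
    proof (rule inj_onI)
      fix x y assume xy: "x \<in> A i" "y \<in> A i" "a x i = a y i"
      show "x = y"
      proof (rule ccontr)
        assume "x \<noteq> y"
        hence "x < y \<or> y < x" by auto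
        moreover have Ax: "x \<in> J i" "y \<in> J i" using xy AJ by auto
        moreover have "\<forall>j'\<in>J i. j' < y \<longrightarrow> a j' i \<noteq> a y i" "\<forall>j'\<in>J i. j' < x \<longrightarrow> a j' i \<noteq> a x i"
          using xy(1,2) unfolding A_def by auto
        ultimately show False using xy(3) by metis
      qed
    qed
    have "(\<lambda>j. a j i) ` A i \<subseteq> S i" unfolding A_def J_def by auto
    hence "card ((\<lambda>j. a j i) ` A i) \<le> card (S i)" by (intro card_mono) auto
    thus ?thesis using card_image[OF inj] S i by simp
  qed
  have B1: "B i \<subseteq> {1..<s}" for i
  proof
    fix j assume j: "j \<in> B i"
    hence "j \<in> J i" "j \<notin> A i" unfolding B_def by auto
    then obtain j' where "j' \<in> J i" "j' < j" unfolding A_def by auto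
    hence "j \<noteq> 0" by auto
    moreover have "j < s" using \<open>j \<in> J i\<close> unfolding J_def by auto
    ultimately show "j \<in> {1..<s}" by auto
  qed
  have PS: "P i \<in> PS s l" if "i < n" for i
  proof -
    have "A i \<subseteq> {..<s}" using AJ[of i] unfolding J_def by auto
    thus ?thesis using that cardA B1 unfolding P_def PS_def B_def by auto
  qed
  have sumB: "real (\<Sum>i<n. card (snd (P i))) \<ge> real s * ((1 - \<rho>) * real n) - real l * real n"
  proof -
    have cB: "real (card (B i)) \<ge> real (card (J i)) - real l" if "i < n" for i
    proof -
      have "finite (A i)" using AJ[of i] finJ[of i] finite_subset by blast
      hence "card (B i) = card (J i) - card (A i)" unfolding B_def using AJ[of i] by (rule card_Diff_subset)
      moreover have "card (A i) \<le> card (J i)" using AJ finJ by (simp add: card_mono)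
      ultimately show ?thesis using cardA[OF that] by linarith
    qed
    have dc: "(\<Sum>j\<in>{..<s}. card {i\<in>{..<n}. a j i \<in> S i}) = (\<Sum>i\<in>{..<n}. card {j\<in>{..<s}. a j i \<in> S i})"
      by (rule double_count) auto
    have "real s * ((1 - \<rho>) * real n) = (\<Sum>j\<in>{..<s}. (1 - \<rho>) * real n)" by simp
    also have "\<dots> \<le> (\<Sum>j\<in>{..<s}. real (card {i\<in>{..<n}. a j i \<in> S i}))"
      using ap(1) by (intro sum_mono) (auto simp: lr_ball_def)
    also have "\<dots> = (\<Sum>i\<in>{..<n}. real (card (J i)))"
      unfolding J_def using dc by (simp only: of_nat_sum[symmetric] of_nat_eq_iff)
    also have "\<dots> \<le> (\<Sum>i\<in>{..<n}. real (card (B i)) + real l)"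
      using cB by (intro sum_mono) (smt (verit) lessThan_iff)
    also have "\<dots> = real (\<Sum>i<n. card (snd (P i))) + real l * real n"
      by (simp add: sum.distrib P_def)
    finally show ?thesis by linarith
  qed
  have PP: "P \<in> Pats n s l ((1 - \<rho>) * real n)"
    unfolding Pats_def using PS sumB by (auto simp: P_def)
  have rows: "G i \<in> Wset k d (fst (P i)) (snd (P i))" if i: "i < n" for i
  proof -
    have "\<forall>j\<in>B i. dot k (G i) (d j) \<in> (\<lambda>a'. dot k (G i) (d a')) ` A i"
    proof
      fix j assume j: "j \<in> B i"
      hence jJ: "j \<in> J i" "j \<notin> A i" unfolding B_def by auto
      define j0 where "j0 = (LEAST j'. j' \<in> J i \<and> a j' i = a j i)"
      have j0: "j0 \<in> J i \<and> a j0 i = a j i" unfolding j0_def by (rule LeastI[of _ j]) (use jJ in auto)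
      have "j0 \<in> A i"
      proof -
        have "a j'' i \<noteq> a j0 i" if "j'' \<in> J i" "j'' < j0" for j''
        proof
          assume "a j'' i = a j0 i"
          hence "j'' \<in> J i \<and> a j'' i = a j i" using that j0 by simp
          hence "j0 \<le> j''" unfolding j0_def by (rule Least_le)
          thus False using that by simp
        qed
        thus ?thesis using j0 unfolding A_def by auto
      qed
      moreover have "dot k (G i) (d j) = dot k (G i) (d j0)"
      proof -
        have "j < s" "j0 < s" using jJ j0 unfolding J_def by auto
        thus ?thesis using ad[of j i] ad[of j0 i] i j0 by simp
      qed
      ultimately show "dot k (G i) (d j) \<in> (\<lambda>a'. dot k (G i) (d a')) ` A i" by blast
    qed
    thus ?thesis using mats_row[OF G i] i unfolding Wset_def P_def by auto
  qed
  have "G \<in> Ev n k s d P" unfolding Ev_def using G trh rows by auto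
  thus ?thesis using dD PP by blast
qed

lemma ln2_ge_half: "ln 2 \<ge> (1/2::real)"
  using exp_half_le2 by (subst ln_ge_iff) auto

lemma ln_Suc_le: assumes "(1::real) \<le> u" shows "ln (u + 1) \<le> u * ln 2"
proof -
  have "ln ((u + 1) / 2) \<le> (u + 1) / 2 - 1" using assms by (intro ln_le_minus_one) auto
  moreover have "ln ((u + 1) / 2) = ln (u + 1) - ln 2" using assms by (simp add: ln_div)
  moreover have "(u - 1) / 2 \<le> u * ln 2 - ln 2"
  proof -
    have "(u - 1) * (1/2) \<le> (u - 1) * ln 2" using ln2_ge_half assms by (intro mult_left_mono) auto
    thus ?thesis by (simp add: algebra_simps)
  qed
  moreover have "(u + 1) / 2 - 1 = (u - 1) / 2" by (simp add: field_simps)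
  ultimately show ?thesis by linarith
qed

lemma key_ineq:
  fixes R \<epsilon> Q lam \<sigma> l :: real
  assumes R: "0 < R" and e: "0 < \<epsilon>" "\<epsilon> < 1" and l: "l = 1 \<or> l \<ge> 2" and lam: "lam = ln l"
    and Q1: "Q \<ge> (8 * R / \<epsilon> + 6) * lam" and Q2: "Q \<ge> lam + 4 * ln 2 / \<epsilon>"
    and s1: "2 * l / \<epsilon> + 1 \<le> \<sigma>" and s2: "\<sigma> \<le> 2 * l / \<epsilon> + 2"
  shows "R * (\<sigma> - 1) * Q + \<sigma> * ln 2 + l * ln (1 + \<sigma> / 2) + (\<sigma> * (R + \<epsilon>) - l) * (lam - Q) \<le> - \<epsilon> * Q / 8"
proof -
  define W where "W = Q - lam"
  define u where "u = 1 / \<epsilon>"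
  have l1: "l \<ge> 1" using l by auto
  have lam0: "lam \<ge> 0" using lam l1 by simp
  have u1: "u > 1" using e by (simp add: u_def)
  have eu: "\<epsilon> * u = 1" using e by (simp add: u_def)
  have ln2: "ln 2 \<ge> (1/2::real)" by (rule ln2_ge_half)
  have W1: "W \<ge> (8 * R * u + 5) * lam" using Q1 unfolding W_def u_def by (simp add: algebra_simps)
  have W2: "W \<ge> 4 * ln 2 * u" using Q2 unfolding W_def u_def by (simp add: algebra_simps)
  have "4 * ln 2 * u \<ge> 0" using u1 ln2 by simp
  hence W0: "W \<ge> 0" using W2 by linarith
  have "8 * R * u * lam \<ge> 0" using R u1 lam0 by simp
  moreover have "(8 * R * u + 5) * lam = 8 * R * u * lam + 5 * lam" by (simp add: algebra_simps)
  ultimately have W5: "W \<ge> 5 * lam" using W1 by linarith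
  have eW2: "\<epsilon> * W \<ge> 4 * ln 2"
  proof -
    have "\<epsilon> * W \<ge> \<epsilon> * (4 * ln 2 * u)" using W2 e by (intro mult_left_mono) auto
    moreover have "\<epsilon> * (4 * ln 2 * u) = 4 * ln 2 * (\<epsilon> * u)" by (simp add: algebra_simps)
    ultimately show ?thesis using eu by simp
  qed
  have eW1: "\<epsilon> * W \<ge> 8 * R * lam"
  proof -
    have "\<epsilon> * W \<ge> \<epsilon> * ((8 * R * u + 5) * lam)" using W1 e by (intro mult_left_mono) auto
    moreover have "\<epsilon> * ((8 * R * u + 5) * lam) = 8 * R * lam * (\<epsilon> * u) + 5 * \<epsilon> * lam" by (simp add: algebra_simps)
    moreover have "5 * \<epsilon> * lam \<ge> 0" using e lam0 by simp
    ultimately show ?thesis using eu by simp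
  qed
  define c0 where "c0 = \<epsilon> * W - R * lam - ln 2"
  have "R * lam \<ge> 0" using R lam0 by simp
  hence c0: "c0 \<ge> 0" unfolding c0_def using eW1 eW2 ln2 by linarith
  have "\<sigma> * c0 \<ge> (2 * l * u + 1) * c0" using s1 c0 unfolding u_def by (intro mult_right_mono) auto
  moreover have "(2 * l * u + 1) * c0 = 2 * l * W * (\<epsilon> * u) - 2 * l * R * lam * u - 2 * l * ln 2 * u + \<epsilon> * W - R * lam - ln 2"
    unfolding c0_def by (simp add: algebra_simps)
  ultimately have sc: "\<sigma> * c0 \<ge> 2 * l * W - 2 * l * R * lam * u - 2 * l * ln 2 * u + \<epsilon> * W - R * lam - ln 2"
    using eu by simp
  have LHS: "- \<epsilon> * Q / 8 - (R * (\<sigma> - 1) * Q + \<sigma> * ln 2 + l * ln (1 + \<sigma> / 2) + (\<sigma> * (R + \<epsilon>) - l) * (lam - Q))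
      = \<sigma> * c0 - l * W + R * (W + lam) - l * ln (1 + \<sigma> / 2) - \<epsilon> * (W + lam) / 8"
    unfolding c0_def W_def by (simp add: algebra_simps)
  have N: "7/8 * \<epsilon> * W - \<epsilon> * lam / 8 + R * W - ln 2 \<ge> 0"
  proof -
    have "\<epsilon> * lam \<le> \<epsilon> * W / 5" using W5 e by (simp add: field_simps)
    moreover have "R * W \<ge> 0" using R W0 by simp
    ultimately show ?thesis using eW2 ln2 by linarith
  qed
  have sig2: "1 + \<sigma> / 2 \<le> l * u + 2" using s2 unfolding u_def by (simp add: field_simps)
  have "2 * l / \<epsilon> \<ge> 0" using e l1 by simp
  hence sigpos: "1 + \<sigma> / 2 > 0" using s1 by linarith
  have Br: "W - 2 * R * lam * u - 2 * ln 2 * u - ln (1 + \<sigma> / 2) \<ge> 0"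
    using l
  proof
    assume l1': "l = 1"
    hence "lam = 0" using lam by simp
    have "ln (1 + \<sigma> / 2) \<le> ln (2 * (u + 1))" using sig2 sigpos l1' u1 by (subst ln_le_cancel_iff) auto
    also have "\<dots> = ln 2 + ln (u + 1)" using u1 by (intro ln_mult_pos) auto
    also have "\<dots> \<le> ln 2 + u * ln 2" using ln_Suc_le u1 by simp
    also have "\<dots> \<le> 2 * ln 2 * u"
    proof -
      have "1 * ln 2 \<le> u * ln 2" using u1 ln2 by (intro mult_right_mono) auto
      thus ?thesis by simp
    qed
    finally show ?thesis using W2 \<open>lam = 0\<close> by simp
  next
    assume l2: "l \<ge> 2"
    have "8 * R * lam * u \<le> W - 5 * lam" using W1 by (simp add: algebra_simps)
    hence a: "2 * R * lam * u \<le> (W - 5 * lam) / 4" by simp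
    have "ln (1 + \<sigma> / 2) \<le> ln (l * (u + 1))" using sig2 sigpos l2 u1
      by (subst ln_le_cancel_iff) (auto simp: algebra_simps)
    also have "\<dots> = lam + ln (u + 1)" using u1 l2 lam by (simp add: ln_mult_pos)
    also have "\<dots> \<le> lam + u * ln 2" using ln_Suc_le u1 by simp
    finally have b: "ln (1 + \<sigma> / 2) \<le> lam + u * ln 2" .
    show ?thesis using a b W2 lam0 by (simp add: algebra_simps)
  qed
  have "l * (W - 2 * R * lam * u - 2 * ln 2 * u - ln (1 + \<sigma> / 2)) \<ge> 0" using Br l1 by simp
  hence "0 \<le> \<sigma> * c0 - l * W + R * (W + lam) - l * ln (1 + \<sigma> / 2) - \<epsilon> * (W + lam) / 8"
  proof -
    have e1: "l * (W - 2 * R * lam * u - 2 * ln 2 * u - ln (1 + \<sigma> / 2)) = l * W - 2 * l * R * lam * u - 2 * l * ln 2 * u - l * ln (1 + \<sigma> / 2)"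
      by (simp add: algebra_simps)
    have e2: "R * (W + lam) = R * W + R * lam" by (simp add: algebra_simps)
    have e3: "\<epsilon> * (W + lam) / 8 = \<epsilon> * W / 8 + \<epsilon> * lam / 8" by (simp add: algebra_simps)
    have e4: "7 / 8 * \<epsilon> * W = 7 / 8 * (\<epsilon> * W)" by simp
    show ?thesis using sc N e1 e2 e3 e4 \<open>l * (W - 2 * R * lam * u - 2 * ln 2 * u - ln (1 + \<sigma> / 2)) \<ge> 0\<close> by linarith
  qed
  thus ?thesis using LHS by linarith
qed

lemma union2_bound:
  assumes A: "finite A" and B: "finite B" and F: "\<forall>a\<in>A. \<forall>b\<in>B. finite (F a b)"
    and M: "\<forall>a\<in>A. \<forall>b\<in>B. real (card (F a b)) \<le> M"
    and X: "X \<subseteq> (\<Union>a\<in>A. \<Union>b\<in>B. F a b)"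
  shows "real (card X) \<le> real (card A) * real (card B) * M"
proof -
  have fin: "finite (\<Union>a\<in>A. \<Union>b\<in>B. F a b)" using A B F by auto
  have "card X \<le> card (\<Union>a\<in>A. \<Union>b\<in>B. F a b)" using X fin by (rule card_mono[rotated])
  also have "\<dots> \<le> (\<Sum>a\<in>A. card (\<Union>b\<in>B. F a b))" by (rule card_UN_le[OF A])
  also have "\<dots> \<le> (\<Sum>a\<in>A. \<Sum>b\<in>B. card (F a b))" by (intro sum_mono card_UN_le[OF B])
  finally have "real (card X) \<le> (\<Sum>a\<in>A. \<Sum>b\<in>B. real (card (F a b)))"
    by (simp only: of_nat_sum[symmetric] of_nat_le_iff)
  also have "\<dots> \<le> (\<Sum>a\<in>A. \<Sum>b\<in>B. M)" using M by (intro sum_mono) auto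
  also have "\<dots> = real (card A) * real (card B) * M" by simp
  finally show ?thesis .
qed

lemma dot_unit: "j < k \<Longrightarrow> dot k (\<lambda>x. if x = j then 1 else 0) m = (m j :: 'a::comm_semiring_1)"
proof -
  assume j: "j < k"
  have "dot k (\<lambda>x. if x = j then 1 else 0) m = (\<Sum>x<k. if x = j then m j else 0)"
    unfolding dot_def by (rule sum.cong) auto
  also have "\<dots> = m j" using j by simp
  finally show ?thesis .
qed

lemma U0_card:
  fixes m :: "nat \<Rightarrow> 'a::{finite,field}"
  assumes m: "m \<in> vecs k" "m \<noteq> (\<lambda>_. 0)"
  shows "card {g \<in> vecs k. dot k g m = 0} * CARD('a) \<le> CARD('a) ^ k"
proof -
  obtain j where j: "m j \<noteq> 0" using m(2) by (auto simp: fun_eq_iff)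
  have jk: "j < k" using j m(1) unfolding vecs_def by (metis (mono_tags, lifting) mem_Collect_eq not_less)
  define d where "d = (\<lambda>x::nat. if x = 1 then m else (\<lambda>_. 0::'a))"
  have e12: "{1..<2::nat} = {1}" by auto
  have trh: "tri_h k 2 d" unfolding tri_h_def e12
    by (rule exI[of _ "\<lambda>_. (\<lambda>x. if x = j then 1 else 0)"]) (use j jk in \<open>auto simp: d_def dot_unit vecs_def\<close>)
  have "Wset k d {0} {1} = {g \<in> vecs k. dot k g m = 0}" unfolding Wset_def d_def by auto
  moreover have "card (Wset k d {0} {1}) * CARD('a) ^ card {1::nat} \<le> 1 ^ card {1::nat} * CARD('a) ^ k"
    by (rule row_bound[OF trh]) (auto simp: d_def)
  ultimately show ?thesis by simp
qed

definition E1set :: "nat \<Rightarrow> nat \<Rightarrow> real \<Rightarrow> (nat \<Rightarrow> nat \<Rightarrow> 'a::{finite,field}) set" where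
  "E1set n k z0 = {G \<in> mats n k. \<exists>m\<in>vecs k. (\<exists>i<n. dot k (G i) m \<noteq> 0) \<and> real (card {i\<in>{..<n}. dot k (G i) m = 0}) > z0}"

lemma E1_card:
  shows "real (card (E1set n k z0 :: (nat \<Rightarrow> nat \<Rightarrow> 'a::{finite,field}) set))
    \<le> real CARD('a) ^ k * 2 ^ n * (real CARD('a) ^ (k * n) * real CARD('a) powr (- z0))"
proof -
  let ?q = "real CARD('a)"
  have q1: "?q \<ge> 1" by simp
  define Ms where "Ms = (vecs k :: (nat \<Rightarrow> 'a) set) - {\<lambda>_. 0}"
  define Zs where "Zs = {Z. Z \<subseteq> {..<n} \<and> real (card Z) > z0}"
  define U where "U = (\<lambda>(m::nat \<Rightarrow> 'a) (Z::nat set) (i::nat). if i \<in> Z then {g \<in> vecs k. dot k g m = 0} else vecs k)"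
  define F where "F = (\<lambda>m Z. {G \<in> (mats n k :: (nat \<Rightarrow> nat \<Rightarrow> 'a) set). \<forall>i<n. G i \<in> U m Z i})"
  have finMs: "finite Ms" unfolding Ms_def using finite_vecs by blast
  have finZs: "finite Zs" unfolding Zs_def by (rule finite_subset[of _ "Pow {..<n}"]) auto
  have cMs: "card Ms \<le> CARD('a) ^ k"
    using card_mono[OF finite_vecs, of Ms] card_vecs unfolding Ms_def by (metis Diff_subset)
  have cZs: "card Zs \<le> 2 ^ n"
  proof -
    have "card Zs \<le> card (Pow {..<n})" by (rule card_mono) (auto simp: Zs_def)
    thus ?thesis by (simp add: card_Pow)
  qed
  have cover: "(E1set n k z0 :: (nat \<Rightarrow> nat \<Rightarrow> 'a) set) \<subseteq> (\<Union>m\<in>Ms. \<Union>Z\<in>Zs. F m Z)"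
  proof
    fix G :: "nat \<Rightarrow> nat \<Rightarrow> 'a" assume "G \<in> E1set n k z0"
    then obtain m :: "nat \<Rightarrow> 'a" where G: "G \<in> mats n k" "m \<in> vecs k" "\<exists>i<n. dot k (G i) m \<noteq> 0"
      "real (card {i\<in>{..<n}. dot k (G i) m = 0}) > z0" unfolding E1set_def by auto
    have "m \<noteq> (\<lambda>_. 0)" using G(3) by auto
    hence "m \<in> Ms" using G(2) unfolding Ms_def by auto
    moreover have "{i\<in>{..<n}. dot k (G i) m = 0} \<in> Zs" using G(4) unfolding Zs_def by auto
    moreover have "G \<in> F m {i\<in>{..<n}. dot k (G i) m = 0}"
      using G(1) mats_row[OF G(1)] unfolding F_def U_def by auto
    ultimately show "G \<in> (\<Union>m\<in>Ms. \<Union>Z\<in>Zs. F m Z)" by blast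
  qed
  have bound: "real (card (F m Z)) \<le> ?q ^ (k * n) * ?q powr (- z0)" if m: "m \<in> Ms" and Z: "Z \<in> Zs" for m :: "nat \<Rightarrow> 'a" and Z
  proof -
    have Usub: "\<forall>i<n. U m Z i \<subseteq> vecs k" unfolding U_def by auto
    have "card (F m Z) = (\<Prod>i<n. card (U m Z i))" unfolding F_def by (rule card_rows[OF Usub])
    hence "real (card (F m Z)) = (\<Prod>i<n. real (card (U m Z i)))" by simp
    also have "\<dots> \<le> (\<Prod>i<n. ?q ^ k * (if i \<in> Z then 1 / ?q else 1))"
    proof (rule prod_mono)
      fix i assume i: "i \<in> {..<n}"
      have "real (card (U m Z i)) \<le> ?q ^ k * (if i \<in> Z then 1 / ?q else 1)"
      proof (cases "i \<in> Z")
        case True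
        have "card {g \<in> vecs k. dot k g m = 0} * CARD('a) \<le> CARD('a) ^ k"
          using U0_card m unfolding Ms_def by blast
        hence "real (card {g \<in> vecs k. dot k g m = 0}) * ?q \<le> ?q ^ k"
          by (metis of_nat_le_iff of_nat_mult of_nat_power)
        hence "real (card {g \<in> vecs k. dot k g m = 0}) \<le> ?q ^ k / ?q" by (simp add: field_simps)
        thus ?thesis using True unfolding U_def by simp
      next
        case False thus ?thesis unfolding U_def by (simp add: card_vecs)
      qed
      thus "0 \<le> real (card (U m Z i)) \<and> real (card (U m Z i)) \<le> ?q ^ k * (if i \<in> Z then 1 / ?q else 1)" by simp
    qed
    also have "\<dots> = (?q ^ k) ^ n * (\<Prod>i<n. (if i \<in> Z then 1 / ?q else 1))" by (simp add: prod.distrib)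
    also have "(\<Prod>i<n. (if i \<in> Z then 1 / ?q else 1)) = (1 / ?q) ^ card Z"
    proof -
      have "Z \<subseteq> {..<n}" using Z unfolding Zs_def by auto
      hence "{..<n} \<inter> {i. i \<in> Z} = Z" by auto
      thus ?thesis by (simp add: prod.If_cases)
    qed
    also have "(1 / ?q) ^ card Z = ?q powr (- real (card Z))"
      by (simp add: powr_minus powr_realpow power_one_over divide_inverse power_inverse)
    also have "\<dots> \<le> ?q powr (- z0)" using Z q1 unfolding Zs_def by (intro powr_mono) auto
    finally show ?thesis by (simp add: power_mult mult_left_mono)
  qed
  have finF: "\<forall>m\<in>Ms. \<forall>Z\<in>Zs. finite (F m Z)" unfolding F_def by (intro ballI finite_subset[OF _ finite_mats]) auto
  have "real (card (E1set n k z0 :: (nat \<Rightarrow> nat \<Rightarrow> 'a) set)) \<le> real (card Ms) * real (card Zs) * (?q ^ (k * n) * ?q powr (- z0))"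
  proof (rule union2_bound[of Ms Zs F])
    show "(E1set n k z0 :: (nat \<Rightarrow> nat \<Rightarrow> 'a) set) \<subseteq> (\<Union>m\<in>Ms. \<Union>Z\<in>Zs. F m Z)" by (rule cover)
  qed (use finMs finZs finF bound in auto)
  also have "\<dots> \<le> ?q ^ k * 2 ^ n * (?q ^ (k * n) * ?q powr (- z0))"
  proof (rule mult_right_mono)
    have "real (card Ms) \<le> ?q ^ k" using cMs by (metis of_nat_le_iff of_nat_power)
    moreover have "real (card Zs) \<le> 2 ^ n" using cZs by (metis of_nat_le_iff of_nat_numeral of_nat_power)
    ultimately show "real (card Ms) * real (card Zs) \<le> ?q ^ k * 2 ^ n" by (intro mult_mono) auto
  qed simp
  finally show ?thesis .
qed

lemma num1:
  fixes q R \<epsilon> :: real and n k :: nat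
  assumes q: "q \<ge> 2 powr (4 / \<epsilon>)" and e: "0 < \<epsilon>" and k: "real k = R * real n"
  shows "q ^ k * 2 ^ n * q powr (- ((R + \<epsilon> / 2) * real n)) \<le> q powr (- \<epsilon> * real n / 8)"
proof -
  have q0: "q > 0" using q by (smt (verit) powr_gt_zero)
  have two: "2 \<le> q powr (3 * \<epsilon> / 8)"
  proof -
    have "(2 powr (4 / \<epsilon>)) powr (3 * \<epsilon> / 8) \<le> q powr (3 * \<epsilon> / 8)"
      using q e by (intro powr_mono2) auto
    moreover have "(2 powr (4 / \<epsilon>)) powr (3 * \<epsilon> / 8) = 2 powr (3 / 2)"
      using e by (simp add: powr_powr)
    moreover have "(2::real) powr 1 \<le> 2 powr (3 / 2)" by (intro powr_mono) auto
    ultimately show ?thesis by simp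
  qed
  have "(2::real) ^ n \<le> (q powr (3 * \<epsilon> / 8)) ^ n" using two by (intro power_mono) auto
  also have "\<dots> = q powr (3 * \<epsilon> / 8 * real n)"
    using q0 by (simp add: powr_realpow[symmetric] powr_powr)
  finally have t2: "(2::real) ^ n \<le> q powr (3 * \<epsilon> / 8 * real n)" .
  have "q ^ k = q powr (R * real n)" using q0 k by (simp add: powr_realpow[symmetric])
  hence "q ^ k * 2 ^ n * q powr (- ((R + \<epsilon> / 2) * real n))
      = 2 ^ n * (q powr (R * real n) * q powr (- ((R + \<epsilon> / 2) * real n)))" by simp
  also have "q powr (R * real n) * q powr (- ((R + \<epsilon> / 2) * real n)) = q powr (- (\<epsilon> / 2 * real n))"
    by (simp add: powr_add[symmetric] algebra_simps)
  also have "2 ^ n * q powr (- (\<epsilon> / 2 * real n)) \<le> q powr (3 * \<epsilon> / 8 * real n) * q powr (- (\<epsilon> / 2 * real n))"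
    using t2 by (intro mult_right_mono) auto
  also have "\<dots> = q powr (- \<epsilon> * real n / 8)"
    by (simp add: powr_add[symmetric] algebra_simps)
  finally show ?thesis .
qed

lemma num2:
  fixes q R \<epsilon> :: real and l n k \<sigma> :: nat
  assumes R: "0 < R" and e: "0 < \<epsilon>" "1 - R - \<epsilon> > 0" and l: "0 < l"
    and k: "real k = R * real n"
    and q1: "q \<ge> real l powr (8 * R / \<epsilon> + 6)" and q2: "q \<ge> real l * 2 powr (4 / \<epsilon>)"
    and s1: "2 * real l / \<epsilon> + 1 \<le> real \<sigma>" and s2: "real \<sigma> \<le> 2 * real l / \<epsilon> + 2" and s0: "1 \<le> \<sigma>"
  shows "(q ^ k) ^ (\<sigma> - 1) * (2 ^ \<sigma> * (1 + real \<sigma> / 2) ^ l) ^ n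
      * (real l / q) powr (real \<sigma> * ((1 - (1 - R - \<epsilon>)) * real n) - real l * real n)
      \<le> q powr (- \<epsilon> * real n / 8)"
proof -
  have lpos: "real l > 0" using l by simp
  have q0: "q > 0" using q2 lpos by (smt (verit) mult_pos_pos powr_gt_zero)
  define X where "X = q powr (R * (real \<sigma> - 1)) * (2 ^ \<sigma> * (1 + real \<sigma> / 2) ^ l) * (real l / q) powr (real \<sigma> * (R + \<epsilon>) - real l)"
  define Y where "Y = q powr (- \<epsilon> / 8)"
  have Xpos: "X > 0" unfolding X_def using q0 lpos by (intro mult_pos_pos) auto
  have Ypos: "Y > 0" unfolding Y_def using q0 by simp
  have lnX: "ln X = R * (real \<sigma> - 1) * ln q + real \<sigma> * ln 2 + real l * ln (1 + real \<sigma> / 2)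
      + (real \<sigma> * (R + \<epsilon>) - real l) * (ln (real l) - ln q)"
  proof -
    have a: "ln (q powr (R * (real \<sigma> - 1))) = R * (real \<sigma> - 1) * ln q" using q0 by (simp add: ln_powr)
    have b: "ln ((2::real) ^ \<sigma> * (1 + real \<sigma> / 2) ^ l) = real \<sigma> * ln 2 + real l * ln (1 + real \<sigma> / 2)"
      by (simp add: ln_mult_pos ln_realpow add_pos_nonneg)
    have c: "ln ((real l / q) powr (real \<sigma> * (R + \<epsilon>) - real l)) = (real \<sigma> * (R + \<epsilon>) - real l) * (ln (real l) - ln q)"
    proof -
      have "ln (real l / q) = ln (real l) - ln q" using lpos q0 by (rule ln_divide_pos)
      moreover have "real l / q > 0" using q0 lpos by simp
      ultimately show ?thesis by (simp add: ln_powr)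
    qed
    have pA: "q powr (R * (real \<sigma> - 1)) > 0" using q0 by simp
    have pB: "(2::real) ^ \<sigma> * (1 + real \<sigma> / 2) ^ l > 0" by (simp add: add_pos_nonneg)
    have pC: "(real l / q) powr (real \<sigma> * (R + \<epsilon>) - real l) > 0" using q0 lpos by simp
    have "ln X = ln (q powr (R * (real \<sigma> - 1))) + ln ((2::real) ^ \<sigma> * (1 + real \<sigma> / 2) ^ l)
        + ln ((real l / q) powr (real \<sigma> * (R + \<epsilon>) - real l))"
      unfolding X_def using pA pB pC by (simp add: ln_mult_pos)
    thus ?thesis unfolding a b c by (simp add: add.assoc)
  qed
  have lnY: "ln Y = - \<epsilon> * ln q / 8" unfolding Y_def using q0 by (simp add: ln_powr)
  have e1: "\<epsilon> < 1" using e R by linarith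
  have Q1: "ln q \<ge> (8 * R / \<epsilon> + 6) * ln (real l)"
  proof -
    have "ln (real l powr (8 * R / \<epsilon> + 6)) \<le> ln q" using q1 lpos q0 by (subst ln_le_cancel_iff) auto
    moreover have "ln (real l powr (8 * R / \<epsilon> + 6)) = (8 * R / \<epsilon> + 6) * ln (real l)" using lpos by (simp add: ln_powr)
    ultimately show ?thesis by simp
  qed
  have Q2: "ln q \<ge> ln (real l) + 4 * ln 2 / \<epsilon>"
  proof -
    have "ln (real l * 2 powr (4 / \<epsilon>)) \<le> ln q" using q2 lpos q0 by (subst ln_le_cancel_iff) auto
    moreover have "ln (real l * 2 powr (4 / \<epsilon>)) = ln (real l) + 4 / \<epsilon> * ln 2" using lpos by (simp add: ln_mult_pos ln_powr)
    ultimately show ?thesis by simp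
  qed
  have lcase: "real l = 1 \<or> real l \<ge> 2" using l by (cases "l = 1") auto
  have "ln X \<le> ln Y" unfolding lnX lnY
    by (rule key_ineq[OF R e(1) e1 lcase refl Q1 Q2 s1 s2])
  hence XY: "X \<le> Y" using Xpos Ypos by simp
  have "X ^ n \<le> Y ^ n" using XY Xpos by (intro power_mono) auto
  moreover have "X ^ n = (q ^ k) ^ (\<sigma> - 1) * (2 ^ \<sigma> * (1 + real \<sigma> / 2) ^ l) ^ n
      * (real l / q) powr (real \<sigma> * ((1 - (1 - R - \<epsilon>)) * real n) - real l * real n)"
  proof -
    have p1: "(q powr (R * (real \<sigma> - 1))) ^ n = (q ^ k) ^ (\<sigma> - 1)"
    proof -
      have "(q powr (R * (real \<sigma> - 1))) ^ n = q powr (R * (real \<sigma> - 1) * real n)"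
        using q0 by (simp add: powr_realpow[symmetric] powr_powr)
      also have "\<dots> = q powr (real (k * (\<sigma> - 1)))" using k s0 by (simp add: of_nat_diff algebra_simps)
      also have "\<dots> = q ^ (k * (\<sigma> - 1))" using q0 by (rule powr_realpow)
      also have "\<dots> = (q ^ k) ^ (\<sigma> - 1)" by (simp add: power_mult)
      finally show ?thesis .
    qed
    have p3: "((real l / q) powr (real \<sigma> * (R + \<epsilon>) - real l)) ^ n
        = (real l / q) powr (real \<sigma> * ((1 - (1 - R - \<epsilon>)) * real n) - real l * real n)"
    proof -
      have "((real l / q) powr (real \<sigma> * (R + \<epsilon>) - real l)) ^ n = (real l / q) powr ((real \<sigma> * (R + \<epsilon>) - real l) * real n)"
        using q0 lpos by (simp add: powr_realpow[symmetric] powr_powr)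
      thus ?thesis by (simp add: algebra_simps)
    qed
    show ?thesis unfolding X_def using p1 p3 by (simp add: power_mult_distrib)
  qed
  moreover have "Y ^ n = q powr (- \<epsilon> * real n / 8)"
    unfolding Y_def using q0 by (simp add: powr_realpow[symmetric] powr_powr)
  ultimately show ?thesis by simp
qed

lemma det_main:
  fixes G :: "nat \<Rightarrow> nat \<Rightarrow> 'a::{finite,field}" and R \<epsilon> :: real
  assumes G: "G \<in> mats n k" and nE1: "G \<notin> E1set n k ((R + \<epsilon> / 2) * real n)"
    and nE2: "\<forall>S. (\<forall>i<n. card (S i) = l) \<longrightarrow> \<not> tri n (lr_ball n (1 - R - \<epsilon>) S \<inter> lin_code n k G) \<sigma>"
    and e: "0 < \<epsilon>" "\<epsilon> < 1" and l: "0 < l" and sig: "\<sigma> = nat \<lfloor>2 * real l / \<epsilon>\<rfloor> + 2"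
  shows "list_recoverable n (1 - R - \<epsilon>) l ((2 * real l / \<epsilon>) powr (2 * real l / \<epsilon>)) (lin_code n k G)"
  unfolding list_recoverable_def
proof (intro allI impI)
  fix S :: "nat \<Rightarrow> 'a set" assume S: "\<forall>i<n. card (S i) = l"
  define P where "P = lr_ball n (1 - R - \<epsilon>) S \<inter> lin_code n k G"
  define K where "K = 2 * real l / \<epsilon>"
  have K1: "K \<ge> 1"
  proof -
    have "real l \<ge> 1" using l by simp
    hence "2 * real l \<ge> \<epsilon>" using e by linarith
    thus ?thesis unfolding K_def using e by (simp add: field_simps)
  qed
  have "real (card P) \<le> K ^ nat \<lfloor>K\<rfloor>"
  proof (rule det_bound[where P=P and n=n and S=S and t="(1 - (1 - R - \<epsilon>)) * real n" and l=l
        and z="(R + \<epsilon> / 2) * real n" and c="\<epsilon> / 2" and K=K and X=P and j="nat \<lfloor>K\<rfloor>"])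
    show "P \<subseteq> vecs n" unfolding P_def lr_ball_def by auto
    show "\<forall>x\<in>P. (1 - (1 - R - \<epsilon>)) * real n \<le> real (card {i \<in> {..<n}. x i \<in> S i})"
      unfolding P_def lr_ball_def by auto
    show "\<forall>i<n. card (S i) \<le> l" using S by simp
    show "\<forall>x\<in>P. \<forall>y\<in>P. x \<noteq> y \<longrightarrow> real (card {i \<in> {..<n}. x i = y i}) \<le> (R + \<epsilon> / 2) * real n"
    proof (intro ballI impI)
      fix x y assume xy: "x \<in> P" "y \<in> P" "x \<noteq> y"
      obtain m1 where m1: "m1 \<in> vecs k" "x = (\<lambda>i. if i < n then dot k (G i) m1 else 0)"
        using xy(1) lin_code_enc[of x n k G] unfolding P_def by blast
      obtain m2 where m2: "m2 \<in> vecs k" "y = (\<lambda>i. if i < n then dot k (G i) m2 else 0)"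
        using xy(2) lin_code_enc[of y n k G] unfolding P_def by blast
      define m where "m = (\<lambda>j. m1 j - m2 j)"
      have mv: "m \<in> vecs k" using m1 m2 unfolding m_def vecs_def by auto
      have eq: "{i \<in> {..<n}. x i = y i} = {i \<in> {..<n}. dot k (G i) m = 0}"
        using m1(2) m2(2) unfolding m_def by (auto simp: dot_diff_right)
      have xyv: "x \<in> vecs n" "y \<in> vecs n" using xy unfolding P_def lr_ball_def by auto
      obtain i where i: "x i \<noteq> y i" using xy(3) by (auto simp: fun_eq_iff)
      have "i < n" using vecs_diff_lt[OF xyv i] .
      hence "\<exists>i<n. dot k (G i) m \<noteq> 0" using i m1(2) m2(2) unfolding m_def by (auto simp: dot_diff_right)
      hence "\<not> real (card {i \<in> {..<n}. dot k (G i) m = 0}) > (R + \<epsilon> / 2) * real n"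
        using nE1 G mv unfolding E1set_def by auto
      thus "real (card {i \<in> {..<n}. x i = y i}) \<le> (R + \<epsilon> / 2) * real n" using eq by simp
    qed
    show "\<epsilon> / 2 * real n \<le> (1 - (1 - R - \<epsilon>)) * real n - (R + \<epsilon> / 2) * real n"
      by (simp add: algebra_simps)
    show "0 < \<epsilon> / 2" using e by simp
    show "K = real l / (\<epsilon> / 2)" unfolding K_def by simp
    show "1 \<le> K" by (rule K1)
    show "P \<subseteq> P" by simp
    show "\<not> tri n P (nat \<lfloor>K\<rfloor> + 2)" using nE2 S sig unfolding P_def K_def by auto
  qed
  also have "K ^ nat \<lfloor>K\<rfloor> = K powr real (nat \<lfloor>K\<rfloor>)"
  proof -
    have "K > 0" using K1 by simp
    thus ?thesis by (rule powr_realpow[symmetric])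
  qed
  also have "\<dots> \<le> K powr K"
  proof (rule powr_mono)
    have "0 \<le> \<lfloor>K\<rfloor>" using K1 by simp
    thus "real (nat \<lfloor>K\<rfloor>) \<le> K" by linarith
  qed (use K1 in auto)
  finally show "real (card (lr_ball n (1 - R - \<epsilon>) S \<inter> lin_code n k G)) \<le> (2 * real l / \<epsilon>) powr (2 * real l / \<epsilon>)"
    unfolding P_def K_def .
qed

lemma E2_card:
  fixes \<rho> :: real
  assumes l: "0 < l" "l \<le> CARD('a)" and s: "1 \<le> \<sigma>"
  shows "real (card {G \<in> (mats n k :: (nat \<Rightarrow> nat \<Rightarrow> 'a::{finite,field}) set). \<exists>S. (\<forall>i<n. card (S i) = l) \<and> tri n (lr_ball n \<rho> S \<inter> lin_code n k G) \<sigma>})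
     \<le> real (card (Dset k \<sigma> :: (nat \<Rightarrow> nat \<Rightarrow> 'a) set)) * real (card (Pats n \<sigma> l ((1 - \<rho>) * real n)))
       * (real CARD('a) ^ (k * n) * (real l / real CARD('a)) powr (real \<sigma> * ((1 - \<rho>) * real n) - real l * real n))"
proof (rule union2_bound[of "Dset k \<sigma>" "Pats n \<sigma> l ((1 - \<rho>) * real n)" "Ev n k \<sigma>"])
  show "finite (Dset k \<sigma> :: (nat \<Rightarrow> nat \<Rightarrow> 'a) set)" by (rule finite_Dset)
  show "finite (Pats n \<sigma> l ((1 - \<rho>) * real n))" by (rule finite_Pats)
  show "\<forall>a\<in>Dset k \<sigma>. \<forall>b\<in>Pats n \<sigma> l ((1 - \<rho>) * real n). finite (Ev n k \<sigma> (a :: nat \<Rightarrow> nat \<Rightarrow> 'a) b)"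
    unfolding Ev_def by (intro ballI finite_subset[OF _ finite_mats]) auto
  show "\<forall>a\<in>Dset k \<sigma>. \<forall>b\<in>Pats n \<sigma> l ((1 - \<rho>) * real n). real (card (Ev n k \<sigma> (a :: nat \<Rightarrow> nat \<Rightarrow> 'a) b))
      \<le> real CARD('a) ^ (k * n) * (real l / real CARD('a)) powr (real \<sigma> * ((1 - \<rho>) * real n) - real l * real n)"
    using Ev_card l by blast
  show "{G \<in> (mats n k :: (nat \<Rightarrow> nat \<Rightarrow> 'a) set). \<exists>S. (\<forall>i<n. card (S i) = l) \<and> tri n (lr_ball n \<rho> S \<inter> lin_code n k G) \<sigma>}
      \<subseteq> (\<Union>a\<in>Dset k \<sigma>. \<Union>b\<in>Pats n \<sigma> l ((1 - \<rho>) * real n). Ev n k \<sigma> a b)"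
  proof
    fix G :: "nat \<Rightarrow> nat \<Rightarrow> 'a"
    assume "G \<in> {G \<in> mats n k. \<exists>S. (\<forall>i<n. card (S i) = l) \<and> tri n (lr_ball n \<rho> S \<inter> lin_code n k G) \<sigma>}"
    then obtain S where G: "G \<in> mats n k" "\<forall>i<n. card (S i) = l" "tri n (lr_ball n \<rho> S \<inter> lin_code n k G) \<sigma>" by auto
    show "G \<in> (\<Union>a\<in>Dset k \<sigma>. \<Union>b\<in>Pats n \<sigma> l ((1 - \<rho>) * real n). Ev n k \<sigma> a b)"
      using E2_cover[OF G s] by blast
  qed
qed

theorem theorem3p1:
  fixes R \<epsilon> :: real and l n k :: nat
    and dummy :: "'a :: {finite, field}"
  assumes "0 < R" and "R < 1" and "0 < \<epsilon>" and "1 - R - \<epsilon> > 0"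
    and "l > 0"
    and "real k = R * real n"
    and "real CARD('a) \<ge> real l powr (8 * R / \<epsilon> + 6)"
    and "real CARD('a) \<ge> real l * 2 powr (4 / \<epsilon>)"
  shows "real (card {G \<in> (mats n k :: (nat \<Rightarrow> nat \<Rightarrow> 'a) set).
             list_recoverable n (1 - R - \<epsilon>) l ((2 * real l / \<epsilon>) powr (2 * real l / \<epsilon>))
               (lin_code n k G)})
         / real (card (mats n k :: (nat \<Rightarrow> nat \<Rightarrow> 'a) set))
       \<ge> 1 - 2 * real CARD('a) powr (- \<epsilon> * real n / 8)"
proof -
  note R = assms(1) and e = assms(3) and e1 = assms(4) and l = assms(5) and k = assms(6)
    and q1 = assms(7) and q2 = assms(8)
  let ?q = "real CARD('a)"
  define \<sigma> where "\<sigma> = nat \<lfloor>2 * real l / \<epsilon>\<rfloor> + 2"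
  define z0 where "z0 = (R + \<epsilon> / 2) * real n"
  define good where "good = {G \<in> (mats n k :: (nat \<Rightarrow> nat \<Rightarrow> 'a) set).
             list_recoverable n (1 - R - \<epsilon>) l ((2 * real l / \<epsilon>) powr (2 * real l / \<epsilon>)) (lin_code n k G)}"
  define E1 where "E1 = (E1set n k z0 :: (nat \<Rightarrow> nat \<Rightarrow> 'a) set)"
  define E2 where "E2 = {G \<in> (mats n k :: (nat \<Rightarrow> nat \<Rightarrow> 'a) set). \<exists>S. (\<forall>i<n. card (S i) = l) \<and>
      tri n (lr_ball n (1 - R - \<epsilon>) S \<inter> lin_code n k G) \<sigma>}"
  define M where "M = real (card (mats n k :: (nat \<Rightarrow> nat \<Rightarrow> 'a) set))"
  have ee1: "\<epsilon> < 1" using R e1 by linarith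
  have M: "M = ?q ^ (k * n)" unfolding M_def by (simp add: card_mats power_mult)
  have Mpos: "M > 0" unfolding M by simp
  have fin: "finite (mats n k :: (nat \<Rightarrow> nat \<Rightarrow> 'a) set)" by (rule finite_mats)
  have lpos: "real l \<ge> 1" using l by simp
  have twop: "(2::real) powr (4 / \<epsilon>) \<ge> 1"
  proof -
    have "(2::real) powr 0 \<le> 2 powr (4 / \<epsilon>)" using e by (intro powr_mono) auto
    thus ?thesis by simp
  qed
  have lq: "l \<le> CARD('a)"
  proof -
    have "real l * 1 \<le> real l * 2 powr (4 / \<epsilon>)" using twop by (intro mult_left_mono) auto
    hence "real l \<le> ?q" using q2 by simp
    thus ?thesis by simp
  qed
  have q2': "?q \<ge> 2 powr (4 / \<epsilon>)"
  proof -
    have "2 powr (4 / \<epsilon>) \<le> real l * 2 powr (4 / \<epsilon>)" using lpos mult_right_mono[of 1 "real l" "2 powr (4 / \<epsilon>)"] by simp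
    thus ?thesis using q2 by linarith
  qed
  have cov: "(mats n k :: (nat \<Rightarrow> nat \<Rightarrow> 'a) set) \<subseteq> good \<union> E1 \<union> E2"
  proof
    fix G :: "nat \<Rightarrow> nat \<Rightarrow> 'a" assume G: "G \<in> mats n k"
    show "G \<in> good \<union> E1 \<union> E2"
    proof (cases "G \<in> E1 \<or> G \<in> E2")
      case True thus ?thesis by auto
    next
      case False
      have "list_recoverable n (1 - R - \<epsilon>) l ((2 * real l / \<epsilon>) powr (2 * real l / \<epsilon>)) (lin_code n k G)"
      proof (rule det_main[OF G])
        show "G \<notin> E1set n k ((R + \<epsilon> / 2) * real n)" using False unfolding E1_def z0_def by auto
        show "\<forall>S. (\<forall>i<n. card (S i) = l) \<longrightarrow> \<not> tri n (lr_ball n (1 - R - \<epsilon>) S \<inter> lin_code n k G) \<sigma>"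
          using False G unfolding E2_def by auto
      qed (use e ee1 l \<sigma>_def in auto)
      thus ?thesis using G unfolding good_def by auto
    qed
  qed
  have "card (mats n k :: (nat \<Rightarrow> nat \<Rightarrow> 'a) set) \<le> card (good \<union> E1 \<union> E2)"
    by (rule card_mono[OF _ cov]) (auto simp: good_def E1_def E1set_def E2_def intro: finite_subset[OF _ fin])
  also have "\<dots> \<le> card good + card E1 + card E2" by (meson card_Un_le add_le_mono1 le_trans)
  finally have cM: "M \<le> real (card good) + real (card E1) + real (card E2)" unfolding M_def by linarith
  have bE1: "real (card E1) \<le> M * ?q powr (- \<epsilon> * real n / 8)"
  proof -
    have "real (card E1) \<le> ?q ^ k * 2 ^ n * (?q ^ (k * n) * ?q powr (- z0))" unfolding E1_def by (rule E1_card)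
    also have "\<dots> = M * (?q ^ k * 2 ^ n * ?q powr (- ((R + \<epsilon> / 2) * real n)))" unfolding M z0_def by simp
    also have "\<dots> \<le> M * ?q powr (- \<epsilon> * real n / 8)"
      using num1[OF q2' e k] Mpos by (intro mult_left_mono) auto
    finally show ?thesis .
  qed
  have s1: "1 \<le> \<sigma>" unfolding \<sigma>_def by simp
  have sig_real: "real \<sigma> = real_of_int \<lfloor>2 * real l / \<epsilon>\<rfloor> + 2"
  proof -
    have "0 \<le> \<lfloor>2 * real l / \<epsilon>\<rfloor>" using e by simp
    thus ?thesis unfolding \<sigma>_def by simp
  qed
  have sA: "2 * real l / \<epsilon> + 1 \<le> real \<sigma>" using sig_real by linarith
  have sB: "real \<sigma> \<le> 2 * real l / \<epsilon> + 2" using sig_real by linarith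
  have bE2: "real (card E2) \<le> M * ?q powr (- \<epsilon> * real n / 8)"
  proof -
    have "real (card E2) \<le> real (card (Dset k \<sigma> :: (nat \<Rightarrow> nat \<Rightarrow> 'a) set)) * real (card (Pats n \<sigma> l ((1 - (1 - R - \<epsilon>)) * real n)))
       * (?q ^ (k * n) * (real l / ?q) powr (real \<sigma> * ((1 - (1 - R - \<epsilon>)) * real n) - real l * real n))"
      unfolding E2_def by (rule E2_card[OF l lq s1])
    also have "\<dots> \<le> (?q ^ k) ^ (\<sigma> - 1) * (2 ^ \<sigma> * (1 + real \<sigma> / 2) ^ l) ^ n
       * (?q ^ (k * n) * (real l / ?q) powr (real \<sigma> * ((1 - (1 - R - \<epsilon>)) * real n) - real l * real n))"
    proof (rule mult_right_mono)
      have cD: "real (card (Dset k \<sigma> :: (nat \<Rightarrow> nat \<Rightarrow> 'a) set)) = (?q ^ k) ^ (\<sigma> - 1)" by (simp add: card_Dset)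
      have "real (card (Pats n \<sigma> l ((1 - (1 - R - \<epsilon>)) * real n))) \<le> real (card (PS \<sigma> l) ^ n)"
        using card_Pats by (metis of_nat_le_iff)
      also have "\<dots> = real (card (PS \<sigma> l)) ^ n" by simp
      also have "\<dots> \<le> (2 ^ \<sigma> * (1 + real \<sigma> / 2) ^ l) ^ n" using card_PS by (intro power_mono) auto
      finally have cP: "real (card (Pats n \<sigma> l ((1 - (1 - R - \<epsilon>)) * real n))) \<le> (2 ^ \<sigma> * (1 + real \<sigma> / 2) ^ l) ^ n" .
      show "real (card (Dset k \<sigma> :: (nat \<Rightarrow> nat \<Rightarrow> 'a) set)) * real (card (Pats n \<sigma> l ((1 - (1 - R - \<epsilon>)) * real n)))
          \<le> (?q ^ k) ^ (\<sigma> - 1) * (2 ^ \<sigma> * (1 + real \<sigma> / 2) ^ l) ^ n"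
        unfolding cD using cP by (intro mult_left_mono) auto
    qed simp
    also have "\<dots> = M * ((?q ^ k) ^ (\<sigma> - 1) * (2 ^ \<sigma> * (1 + real \<sigma> / 2) ^ l) ^ n
       * (real l / ?q) powr (real \<sigma> * ((1 - (1 - R - \<epsilon>)) * real n) - real l * real n))" unfolding M by simp
    also have "\<dots> \<le> M * ?q powr (- \<epsilon> * real n / 8)"
      using num2[OF R e e1 l k q1 q2 sA sB s1] Mpos by (intro mult_left_mono) auto
    finally show ?thesis .
  qed
  have "real (card good) \<ge> M - 2 * M * ?q powr (- \<epsilon> * real n / 8)" using cM bE1 bE2 by linarith
  hence "real (card good) / M \<ge> (M - 2 * M * ?q powr (- \<epsilon> * real n / 8)) / M"
    using Mpos by (intro divide_right_mono) auto
  also have "(M - 2 * M * ?q powr (- \<epsilon> * real n / 8)) / M = 1 - 2 * ?q powr (- \<epsilon> * real n / 8)"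
    using Mpos by (simp add: field_simps)
  finally show ?thesis unfolding good_def M_def by simp
qed

end
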